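(* Let $e>1$ be odd, $t\ge0$, $\mathbf c=(t+(1-e)/2,0)$, $\mu$ a bipartition and $\lambda=\Phi_t(\mu)$. Let $\mu'=((\mu')^1,(\mu')^2)$ and $\mathbf c'\in\mathbb Z^2$ be such that $\mathfrak B(\mu',\mathbf c')$ is obtained from $\mathfrak B(\mu,\mathbf c)$ by an elementary operation of type (a) or (b). Let $\lambda'$ be the partition associated to the $1$-runner abacus $\{2j+e:j\in\mathfrak B(\mu',\mathbf c')^1\}\cup\{2j:j\in\mathfrak B(\mu',\mathbf c')^2\}$. Then $\lambda'$ is obtained from $\lambda$ by removing an $e$-hook. Let $t'$ be such that $\lambda'$ has $2$-core $\Delta_{t'}$ and let $\tilde\mu$ be the bipartition with $\Phi_{t'}(\tilde\mu)=\lambda'$. If the operation is of type (b), then $t'=t+2$. If it is of type (a), then $t'=t-2$ if $t\ge2$, $t'=0$ if $t=1$, and $t'=1$ if $t=0$. Moreover $\tilde\mu=\mu'$ if $t$ and $t'$ have the same parity, and $\tilde\mu=((\mu')^2,(\mu')^1)$ otherwise.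
   Context: A $1$-runner abacus is a subset $\mathfrak A\subseteq\mathbb Z$ with $-j\in\mathfrak A$ and $j\notin\mathfrak A$ for all $j\ge n$, for some $n\ge1$; listing its elements $a_1>a_2>\cdots$, $\lambda_j$ is the number of elements of $\mathbb Z\setminus\mathfrak A$ less than $a_j$, and $(\lambda_j)$ is the associated partition; its charge is $a_1-\lambda_1$. For a bipartition $\mu$ and $\mathbf c=(c_1,c_2)$, the symbol $\mathfrak B(\mu,\mathbf c)=(\mathfrak B^1,\mathfrak B^2)$ (first and second row) has $\mathfrak B^i=\{\mu^i_j-j+c_i+1:j\ge1\}$; every pair of $1$-runner abaci is $\mathfrak B(\mu,\mathbf c)$ for a unique charged bipartition, $\mu^i$ and $c_i$ being the partition and charge associated to row $i$. Elementary operations on a symbol: (a) delete an element $j$ of the first row which is not in the second row, and insert $j$ into the second row; (b) delete an element $j$ of the second row such that $j-e$ is not in the first row, and insert $j-e$ into the first row. $\Delta_t=(t,\dots,1)$. $2$-quotient: for a $\beta$-set $B$ of $\lambda$ with $|B|$ odd, $\lambda^{(2)}=(\pi(\{x/2:x\in B\text{ even}\}),\pi(\{(x-1)/2:x\in B\text{ odd}\}))$, $\pi(X)$ denoting the partition with $\beta$-set $X$; if $\lambda$ has $2$-core $\Delta_t$, $\bar\lambda^{(2)}=\lambda^{(2)}$ for $t$ even and the swapped pair for $t$ odd; $\Phi_t(\mu)$ is the unique $\lambda$ with $2$-core $\Delta_t$ and $\bar\lambda^{(2)}=\mu$. *)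

theory Defs
  imports Main
begin

text \<open>Partitions are represented as functions nat => nat: p 0 >= p 1 >= ... , eventually 0
  (part p i is the (i+1)-th part).\<close>

definition is_partition :: "(nat \<Rightarrow> nat) \<Rightarrow> bool" where
  "is_partition p \<longleftrightarrow> (\<forall>i. p (Suc i) \<le> p i) \<and> (\<exists>n. \<forall>i\<ge>n. p i = 0)"

definition is_bipartition :: "(nat \<Rightarrow> nat) \<times> (nat \<Rightarrow> nat) \<Rightarrow> bool" where
  "is_bipartition m \<longleftrightarrow> is_partition (fst m) \<and> is_partition (snd m)"

definition is_abacus :: "int set \<Rightarrow> bool" where
  "is_abacus A \<longleftrightarrow> (\<exists>n::int\<ge>1. \<forall>j\<ge>n. -j \<in> A \<and> j \<notin> A)"

text \<open>The (i+1)-th largest element a_(i+1) of an abacus.\<close>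
definition abacus_elt :: "int set \<Rightarrow> nat \<Rightarrow> int" where
  "abacus_elt A i = (THE x. x \<in> A \<and> card {y\<in>A. x < y} = i)"

definition abacus_part :: "int set \<Rightarrow> nat \<Rightarrow> nat" where
  "abacus_part A i = card {x. x \<notin> A \<and> x < abacus_elt A i}"

text \<open>Row of a symbol: {mu_j - j + c + 1 : j >= 1} (here with 0-based index i = j - 1).\<close>
definition beta_row :: "(nat \<Rightarrow> nat) \<Rightarrow> int \<Rightarrow> int set" where
  "beta_row p c = {int (p i) - int i + c | i. True}"

definition symbol :: "(nat \<Rightarrow> nat) \<times> (nat \<Rightarrow> nat) \<Rightarrow> int \<times> int \<Rightarrow> int set \<times> int set" where
  "symbol m c = (beta_row (fst m) (fst c), beta_row (snd m) (snd c))"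

definition elem_op_a :: "int set \<times> int set \<Rightarrow> int set \<times> int set \<Rightarrow> bool" where
  "elem_op_a B B' \<longleftrightarrow> (\<exists>j. j \<in> fst B \<and> j \<notin> snd B \<and> B' = (fst B - {j}, insert j (snd B)))"

definition elem_op_b :: "nat \<Rightarrow> int set \<times> int set \<Rightarrow> int set \<times> int set \<Rightarrow> bool" where
  "elem_op_b e B B' \<longleftrightarrow> (\<exists>j. j \<in> snd B \<and> j - int e \<notin> fst B \<and>
      B' = (insert (j - int e) (fst B), snd B - {j}))"

text \<open>Young diagram (0-based rows and columns) and removal of a rim e-hook
  (border strip: connected skew shape of size e containing no 2x2 square).\<close>
definition diagram :: "(nat \<Rightarrow> nat) \<Rightarrow> (nat \<times> nat) set" where
  "diagram p = {(i, j). j < p i}"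

definition cell_adj :: "(nat \<times> nat) set \<Rightarrow> ((nat \<times> nat) \<times> (nat \<times> nat)) set" where
  "cell_adj S = {(x, y). x \<in> S \<and> y \<in> S \<and>
      \<bar>int (fst x) - int (fst y)\<bar> + \<bar>int (snd x) - int (snd y)\<bar> = 1}"

definition removes_hook :: "nat \<Rightarrow> (nat \<Rightarrow> nat) \<Rightarrow> (nat \<Rightarrow> nat) \<Rightarrow> bool" where
  "removes_hook e p q \<longleftrightarrow> is_partition p \<and> is_partition q \<and> diagram q \<subseteq> diagram p \<and>
     (let S = diagram p - diagram q in
        card S = e \<and> (\<forall>x\<in>S. \<forall>y\<in>S. (x, y) \<in> (cell_adj S)\<^sup>*) \<and>
        \<not> (\<exists>i j. {(i, j), (Suc i, j), (i, Suc j), (Suc i, Suc j)} \<subseteq> S))"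

definition has_core :: "nat \<Rightarrow> (nat \<Rightarrow> nat) \<Rightarrow> (nat \<Rightarrow> nat) \<Rightarrow> bool" where
  "has_core e p \<kappa> \<longleftrightarrow> is_partition p \<and>
     (p, \<kappa>) \<in> {(a, b). removes_hook e a b}\<^sup>* \<and> \<not> (\<exists>q. removes_hook e \<kappa> q)"

definition stair :: "nat \<Rightarrow> nat \<Rightarrow> nat" where
  "stair t i = (if i < t then t - i else 0)"

text \<open>Classical beta-set with n elements of a partition (n at least its length):
  {p_i + n - i : 1 <= i <= n}, 0-based.\<close>
definition beta_nat :: "(nat \<Rightarrow> nat) \<Rightarrow> nat \<Rightarrow> nat set" where
  "beta_nat p n = {p i + (n - 1 - i) | i. i < n}"

definition part_of_beta :: "nat set \<Rightarrow> nat \<Rightarrow> nat" where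
  "part_of_beta X = (THE p. is_partition p \<and> (\<forall>i\<ge>card X. p i = 0) \<and> beta_nat p (card X) = X)"

definition plength :: "(nat \<Rightarrow> nat) \<Rightarrow> nat" where
  "plength p = card {i. p i \<noteq> 0}"

definition quot2 :: "(nat \<Rightarrow> nat) \<Rightarrow> (nat \<Rightarrow> nat) \<times> (nat \<Rightarrow> nat)" where
  "quot2 p = (let B = beta_nat p (2 * plength p + 1) in
     (part_of_beta {x div 2 | x. x \<in> B \<and> even x},
      part_of_beta {(x - 1) div 2 | x. x \<in> B \<and> odd x}))"

definition quot2_bar :: "nat \<Rightarrow> (nat \<Rightarrow> nat) \<Rightarrow> (nat \<Rightarrow> nat) \<times> (nat \<Rightarrow> nat)" where
  "quot2_bar t p = (if even t then quot2 p else prod.swap (quot2 p))"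

definition Phi :: "nat \<Rightarrow> (nat \<Rightarrow> nat) \<times> (nat \<Rightarrow> nat) \<Rightarrow> nat \<Rightarrow> nat" where
  "Phi t m = (THE p. is_partition p \<and> has_core 2 p (stair t) \<and> quot2_bar t p = m)"

end

theory Submission
  imports Defs
begin

lemma part_mono: "is_partition p \<Longrightarrow> i \<le> k \<Longrightarrow> p k \<le> p i"
  unfolding is_partition_def by (metis lift_Suc_antimono_le)

lemma part_zero: "is_partition p \<Longrightarrow> \<exists>N. \<forall>i\<ge>N. p i = 0"
  unfolding is_partition_def by blast

lemma part_strict: "is_partition p \<Longrightarrow> i < k \<Longrightarrow> int (p k) - int k < int (p i) - int i"
  using part_mono[of p i k] by linarith

lemma part_strict_iff: "is_partition p \<Longrightarrow>
   (int (p k) - int k + c < int (p i) - int i + c) = (i < k)"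
  using part_strict[of p i k] part_strict[of p k i] by (cases "i < k"; cases "k < i") auto

lemma part_inj: "is_partition p \<Longrightarrow>
   (int (p k) - int k + c = int (p i) - int i + c) = (i = k)"
  using part_strict[of p i k] part_strict[of p k i] by (cases "i < k"; cases "k < i") auto

lemma beta_row_mem: "x \<in> beta_row p c \<longleftrightarrow> (\<exists>i. x = int (p i) - int i + c)"
  unfolding beta_row_def by auto

lemma abacus_elt_beta:
  assumes P: "is_partition p"
  shows "abacus_elt (beta_row p c) i = int (p i) - int i + c"
proof -
  define g where "g k = int (p k) - int k + c" for k
  have inj: "inj g" using part_inj[OF P] unfolding g_def inj_def by metis
  have set: "{y \<in> beta_row p c. g k < y} = g ` {..<k}" for k
    using part_strict_iff[OF P] unfolding g_def beta_row_mem by auto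
  have cd: "card {y \<in> beta_row p c. g k < y} = k" for k
    unfolding set by (simp add: card_image inj_on_subset[OF inj])
  show ?thesis unfolding abacus_elt_def g_def[symmetric]
  proof (rule the_equality)
    show "g i \<in> beta_row p c \<and> card {y \<in> beta_row p c. g i < y} = i"
      using cd by (auto simp: g_def beta_row_mem)
    fix x assume "x \<in> beta_row p c \<and> card {y \<in> beta_row p c. x < y} = i"
    then obtain k where "x = g k" "card {y \<in> beta_row p c. g k < y} = i"
      by (auto simp: g_def beta_row_mem)
    then show "x = g i" using cd by metis
  qed
qed

lemma abacus_part_beta:
  assumes P: "is_partition p"
  shows "abacus_part (beta_row p c) = p"
proof
  fix i
  define g where "g k = int (p k) - int k + c" for k
  obtain N where N: "\<forall>i\<ge>N. p i = 0" using part_zero[OF P] by blast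
  define n where "n = max N i"
  have inj: "inj g" using part_inj[OF P] unfolding g_def inj_def by metis
  have eq: "{x. x \<notin> beta_row p c \<and> x < g i} = {c - int n..<g i} - g ` {i<..n}"
  proof -
    have H1: "\<exists>i. x = g i" if "x < c - int n" for x
    proof -
      have "nat (c - x) \<ge> N" using that n_def by auto
      then have "g (nat (c - x)) = x" using N that by (simp add: g_def)
      then show ?thesis by metis
    qed
    have H2: "k \<in> {i<..n}" if "g k < g i" "c - int n \<le> g k" for k
    proof -
      have "i < k" using that part_strict_iff[OF P] g_def by auto
      moreover have "k \<le> n"
      proof (rule ccontr)
        assume "\<not> k \<le> n" then have "p k = 0" using N n_def by auto
        then show False using that \<open>\<not> k \<le> n\<close> by (simp add: g_def)
      qed
      ultimately show ?thesis by auto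
    qed
    have H: "\<And>x. x < c - int n \<Longrightarrow> \<exists>i. x = g i"
       "\<And>k. g k < g i \<Longrightarrow> c - int n \<le> g k \<Longrightarrow> k \<in> {i<..n}"
      using H1 H2 by blast+
    show ?thesis unfolding beta_row_mem g_def[symmetric]
    proof (intro set_eqI iffI)
      fix x assume x: "x \<in> {x. (\<nexists>i. x = g i) \<and> x < g i}"
      then have "\<not> x < c - int n" using H(1) by auto
      then show "x \<in> {c - int n..<g i} - g ` {i<..n}" using x by auto
    next
      fix x assume x: "x \<in> {c - int n..<g i} - g ` {i<..n}"
      have "\<nexists>k. x = g k"
      proof
        assume "\<exists>k. x = g k" then obtain k where xk: "x = g k" by blast
        have "g k < g i" "c - int n \<le> g k" using x xk by auto
        then have "k \<in> {i<..n}" by (rule H(2))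
        then show False using x xk by blast
      qed
      then show "x \<in> {x. (\<nexists>i. x = g i) \<and> x < g i}" using x by auto
    qed
  qed
  have "abacus_part (beta_row p c) i = card ({c - int n..<g i} - g ` {i<..n})"
    unfolding abacus_part_def abacus_elt_beta[OF P] g_def[symmetric] eq ..
  also have "\<dots> = card {c - int n..<g i} - card (g ` {i<..n})"
  proof (rule card_Diff_subset)
    show "finite (g ` {i<..n})" by simp
    show "g ` {i<..n} \<subseteq> {c - int n..<g i}"
    proof
      fix y assume "y \<in> g ` {i<..n}"
      then obtain k where k: "k \<in> {i<..n}" "y = g k" by auto
      have "g k < g i" using k part_strict_iff[OF P, where i=i and k=k and c=c] by (auto simp: g_def)
      moreover have "c - int n \<le> g k" using k by (auto simp: g_def)
      ultimately show "y \<in> {c - int n..<g i}" using k by auto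
    qed
  qed
  also have "\<dots> = p i"
  proof -
    have "card (g ` {i<..n}) = n - i" using inj_on_subset[OF inj] by (simp add: card_image)
    moreover have "card {c - int n..<g i} = p i + (n - i)" using n_def by (simp add: g_def)
    ultimately show ?thesis by simp
  qed
  finally show "abacus_part (beta_row p c) i = p i" .
qed

lemma count_beta:
  assumes P: "is_partition p" and N: "\<forall>i\<ge>N. p i = 0" and T: "T \<le> c - int N"
  shows "card (beta_row p c \<inter> {T..}) = nat (c - T) + 1"
proof -
  define g where "g k = int (p k) - int k + c" for k
  have inj: "inj g" using part_inj[OF P] unfolding g_def inj_def by metis
  have "beta_row p c \<inter> {T..} = g ` {..nat (c - T)}"
  proof (intro set_eqI iffI)
    fix x assume x: "x \<in> beta_row p c \<inter> {T..}"
    then obtain i where i: "x = g i" by (auto simp: beta_row_mem g_def)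
    have "i \<le> nat (c - T)"
    proof (rule ccontr)
      assume "\<not> ?thesis" then have "i \<ge> N" using T by auto
      then have "g i = c - int i" using N by (simp add: g_def)
      then show False using x i \<open>\<not> i \<le> nat (c - T)\<close> by auto
    qed
    then show "x \<in> g ` {..nat (c - T)}" using i by auto
  next
    fix x assume "x \<in> g ` {..nat (c - T)}"
    then obtain i where i: "i \<le> nat (c - T)" "x = g i" by auto
    have "x \<ge> T" using i T by (simp add: g_def)
    then show "x \<in> beta_row p c \<inter> {T..}" using i by (auto simp: beta_row_mem g_def)
  qed
  then show ?thesis using inj_on_subset[OF inj] by (simp add: card_image)
qed

lemma count_beta_ex:
  assumes P: "is_partition p"
  shows "\<exists>T0. \<forall>T\<le>T0. card (beta_row p c \<inter> {T..}) = nat (c - T) + 1"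
proof -
  obtain N where N: "\<forall>i\<ge>N. p i = 0" using part_zero[OF P] by blast
  show ?thesis using count_beta[OF P N] by (intro exI[of _ "c - int N"]) auto
qed

lemma charge_remove:
  assumes P: "is_partition p" and Q: "is_partition q"
    and j: "j \<in> beta_row p c" and eq: "beta_row q c' = beta_row p c - {j}"
  shows "c' = c - 1"
proof -
  obtain T1 where T1: "\<forall>T\<le>T1. card (beta_row p c \<inter> {T..}) = nat (c - T) + 1"
    using count_beta_ex[OF P] by blast
  obtain T2 where T2: "\<forall>T\<le>T2. card (beta_row q c' \<inter> {T..}) = nat (c' - T) + 1"
    using count_beta_ex[OF Q] by blast
  define T where "T = min (min T1 T2) (min j (min c c'))"
  have fin: "finite (beta_row p c \<inter> {T..})"
  proof (rule ccontr)
    assume "\<not> ?thesis" then have "card (beta_row p c \<inter> {T..}) = 0" by simp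
    then show False using T1 T_def by auto
  qed
  have "beta_row q c' \<inter> {T..} = (beta_row p c \<inter> {T..}) - {j}" using eq by auto
  then have "card (beta_row q c' \<inter> {T..}) = card (beta_row p c \<inter> {T..}) - 1"
    using j T_def fin by (simp add: card_Diff_singleton)
  then have e: "nat (c' - T) + 1 = nat (c - T) + 1 - 1" using T1 T2 T_def by simp
  have "T \<le> c" "T \<le> c'" by (auto simp: T_def)
  have "int (nat (c' - T) + 1) = int (nat (c - T))" using e by simp
  then show ?thesis using \<open>T \<le> c\<close> \<open>T \<le> c'\<close> by simp
qed

lemma charge_insert:
  assumes P: "is_partition p" and Q: "is_partition q"
    and j: "j \<notin> beta_row p c" and eq: "beta_row q c' = insert j (beta_row p c)"
  shows "c' = c + 1"
proof -
  have "j \<in> beta_row q c'" using eq by auto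
  moreover have "beta_row p c = beta_row q c' - {j}" using eq j by auto
  ultimately have "c = c' - 1" by (rule charge_remove[OF Q P])
  then show ?thesis by simp
qed

lemma sorted_ge_idx:
  assumes "sorted_wrt (<) (xs :: nat list)" "k < length xs"
  shows "k \<le> xs ! k"
  using assms(2)
proof (induction k)
  case 0 then show ?case by simp
next
  case (Suc k)
  have "xs ! k < xs ! Suc k" using sorted_wrt_nth_less[OF assms(1)] Suc.prems by auto
  then show ?case using Suc by auto
qed

lemma beta_nat_exists:
  assumes fin: "finite (X :: nat set)"
  shows "\<exists>p. is_partition p \<and> (\<forall>i\<ge>card X. p i = 0) \<and> beta_nat p (card X) = X"
proof -
  obtain xs where s: "sorted_wrt (<) xs" "set xs = X"
    using ex1_sorted_list_for_set_if_finite[OF fin] by blast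
  have dist: "distinct xs" using s(1) strict_sorted_iff by blast
  define n where "n = length xs"
  have n: "card X = n" using distinct_card[OF dist] s(2) n_def by simp
  define p where "p i = (if i < n then xs ! (n - 1 - i) - (n - 1 - i) else 0)" for i
  have ge: "k < n \<Longrightarrow> k \<le> xs ! k" for k using sorted_ge_idx[OF s(1)] n_def by blast
  have part: "is_partition p"
    unfolding is_partition_def
  proof (intro conjI allI exI[of _ n])
    fix i
    show "p (Suc i) \<le> p i"
    proof (cases "Suc i < n")
      case True
      define k where "k = n - 1 - Suc i"
      have k1: "n - 1 - i = Suc k" using True k_def by simp
      have "xs ! k < xs ! Suc k" using sorted_wrt_nth_less[OF s(1)] k1 n_def True by auto
      moreover have "k \<le> xs ! k" using ge k_def True by auto
      moreover have e1: "p (Suc i) = xs ! k - k" unfolding p_def k_def using True by simp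
      moreover have e2: "p i = xs ! Suc k - Suc k" unfolding p_def using True k1 by simp
      ultimately show ?thesis by arith
    next
      case False then show ?thesis by (simp add: p_def)
    qed
  next
    fix i show "n \<le> i \<longrightarrow> p i = 0" by (simp add: p_def)
  qed
  have "beta_nat p n = X"
  proof -
    have "beta_nat p n = {xs ! (n - 1 - i) | i. i < n}"
      unfolding beta_nat_def
    proof (intro Collect_cong ex_cong1)
      fix x i
      show "(x = p i + (n - 1 - i) \<and> i < n) = (x = xs ! (n - 1 - i) \<and> i < n)"
        using ge[of "n - 1 - i"] by (auto simp: p_def)
    qed
    also have "\<dots> = {xs ! k | k. k < n}"
    proof (intro set_eqI iffI)
      fix x assume "x \<in> {xs ! (n - 1 - i) | i. i < n}"
      then obtain i where "i < n" "x = xs ! (n - 1 - i)" by auto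
      then show "x \<in> {xs ! k | k. k < n}" by (intro CollectI exI[of _ "n - 1 - i"]) auto
    next
      fix x assume "x \<in> {xs ! k | k. k < n}"
      then obtain k where "k < n" "x = xs ! k" by auto
      then show "x \<in> {xs ! (n - 1 - i) | i. i < n}"
        by (intro CollectI exI[of _ "n - 1 - k"]) auto
    qed
    also have "\<dots> = set xs" by (auto simp: set_conv_nth n_def)
    finally show ?thesis using s(2) by simp
  qed
  then show ?thesis using part n by (intro exI[of _ p]) (auto simp: p_def)
qed

lemma abacus_exists:
  assumes low: "{x. x < a} \<subseteq> A" and fin: "finite (A \<inter> {a..})"
  shows "\<exists>p c. is_partition p \<and> A = beta_row p c"
proof -
  define X where "X = (\<lambda>x. nat (x - a)) ` (A \<inter> {a..})"
  have "finite X" using fin X_def by simp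
  then obtain p where P: "is_partition p" "\<forall>i\<ge>card X. p i = 0" "beta_nat p (card X) = X"
    using beta_nat_exists by blast
  define n where "n = card X"
  have "A = beta_row p (a + int n - 1)"
  proof (intro set_eqI iffI)
    fix x assume x: "x \<in> A"
    show "x \<in> beta_row p (a + int n - 1)"
    proof (cases "x < a")
      case True
      define i where "i = nat (a + int n - 1 - x)"
      have "i \<ge> n" using True i_def by auto
      then have "p i = 0" using P(2) n_def by auto
      then have "x = int (p i) - int i + (a + int n - 1)" using True i_def by auto
      then show ?thesis unfolding beta_row_mem by blast
    next
      case False
      then have "nat (x - a) \<in> X" using x X_def by auto
      then have "nat (x - a) \<in> beta_nat p n" using P(3) n_def by simp
      then obtain i where i: "i < n" "nat (x - a) = p i + (n - 1 - i)"
        unfolding beta_nat_def by blast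
      then have "x = int (p i) - int i + (a + int n - 1)" using False by auto
      then show ?thesis unfolding beta_row_mem by blast
    qed
  next
    fix x assume "x \<in> beta_row p (a + int n - 1)"
    then obtain i where i: "x = int (p i) - int i + (a + int n - 1)" unfolding beta_row_mem by blast
    show "x \<in> A"
    proof (cases "i < n")
      case True
      then have "p i + (n - 1 - i) \<in> beta_nat p n" unfolding beta_nat_def by blast
      then have "p i + (n - 1 - i) \<in> X" using P(3) n_def by metis
      then obtain y where y: "y \<in> A" "y \<ge> a" "nat (y - a) = p i + (n - 1 - i)"
        unfolding X_def by auto
      then have "y = x" using i True by auto
      then show ?thesis using y by simp
    next
      case False
      then have "x < a" using i P(2) n_def by auto
      then show ?thesis using low by auto
    qed
  qed
  then show ?thesis using P(1) by blast
qed

lemma beta_row_nat: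
  assumes P: "is_partition p" and N: "\<forall>i\<ge>n. p i = 0"
  shows "beta_row p (int n - 1) = int ` beta_nat p n \<union> {x. x < 0}"
proof (intro set_eqI iffI)
  fix x assume "x \<in> beta_row p (int n - 1)"
  then obtain i where i: "x = int (p i) - int i + (int n - 1)" unfolding beta_row_mem by blast
  show "x \<in> int ` beta_nat p n \<union> {x. x < 0}"
  proof (cases "i < n")
    case True
    then have "x = int (p i + (n - 1 - i))" using i by auto
    then show ?thesis using True unfolding beta_nat_def by blast
  next
    case False then show ?thesis using i N by auto
  qed
next
  fix x assume "x \<in> int ` beta_nat p n \<union> {x. x < 0}"
  then show "x \<in> beta_row p (int n - 1)"
  proof
    assume "x \<in> int ` beta_nat p n"
    then obtain i where "i < n" "x = int (p i + (n - 1 - i))" unfolding beta_nat_def by auto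
    then have "x = int (p i) - int i + (int n - 1)" by auto
    then show ?thesis unfolding beta_row_mem by blast
  next
    assume x: "x \<in> {x. x < 0}"
    define i where "i = nat (int n - 1 - x)"
    have "i \<ge> n" using x i_def by auto
    then have "x = int (p i) - int i + (int n - 1)" using N x i_def by auto
    then show ?thesis unfolding beta_row_mem by blast
  qed
qed

lemma beta_nat_inj:
  assumes P: "is_partition p" "\<forall>i\<ge>n. p i = 0" and Q: "is_partition q" "\<forall>i\<ge>n. q i = 0"
    and eq: "beta_nat p n = beta_nat q n"
  shows "p = q"
proof -
  have "beta_row p (int n - 1) = beta_row q (int n - 1)"
    using beta_row_nat[OF P] beta_row_nat[OF Q] eq by simp
  then show ?thesis using abacus_part_beta[OF P(1)] abacus_part_beta[OF Q(1)] by metis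
qed

lemma card_beta_nat:
  assumes P: "is_partition p"
  shows "card (beta_nat p n) = n"
proof -
  have "beta_nat p n = (\<lambda>i. p i + (n - 1 - i)) ` {..<n}" unfolding beta_nat_def by blast
  moreover have "inj_on (\<lambda>i. p i + (n - 1 - i)) {..<n}"
  proof (rule inj_onI)
    fix i k assume "i \<in> {..<n}" "k \<in> {..<n}" "p i + (n - 1 - i) = p k + (n - 1 - k)"
    then have "int (p k) - int k + 0 = int (p i) - int i + 0" by auto
    then show "i = k" using part_inj[OF P] by blast
  qed
  ultimately show ?thesis by (metis card_image card_lessThan)
qed

lemma part_of_beta_props:
  assumes "finite X"
  shows "is_partition (part_of_beta X) \<and> (\<forall>i\<ge>card X. part_of_beta X i = 0)
     \<and> beta_nat (part_of_beta X) (card X) = X"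
proof -
  obtain p where p: "is_partition p \<and> (\<forall>i\<ge>card X. p i = 0) \<and> beta_nat p (card X) = X"
    using beta_nat_exists[OF assms] by blast
  show ?thesis unfolding part_of_beta_def
  proof (rule theI[of _ p])
    show "is_partition p \<and> (\<forall>i\<ge>card X. p i = 0) \<and> beta_nat p (card X) = X" by (rule p)
    fix q assume "is_partition q \<and> (\<forall>i\<ge>card X. q i = 0) \<and> beta_nat q (card X) = X"
    then show "q = p" using p beta_nat_inj by metis
  qed
qed

lemma part_of_beta_nat:
  assumes P: "is_partition p" and N: "\<forall>i\<ge>n. p i = 0"
  shows "part_of_beta (beta_nat p n) = p"
proof -
  have fin: "finite (beta_nat p n)" unfolding beta_nat_def by auto
  have c: "card (beta_nat p n) = n" by (rule card_beta_nat[OF P])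
  show ?thesis using part_of_beta_props[OF fin] unfolding c
    using beta_nat_inj[OF _ _ P N] by metis
qed

lemma sym_cell_adj: "(a, b) \<in> cell_adj S \<Longrightarrow> (b, a) \<in> cell_adj S"
  unfolding cell_adj_def by (auto simp: abs_minus_commute)

lemma rtrancl_sym_cell_adj: "(a, b) \<in> (cell_adj S)\<^sup>* \<Longrightarrow> (b, a) \<in> (cell_adj S)\<^sup>*"
proof (induction rule: rtrancl_induct)
  case base then show ?case by simp
next
  case (step y z)
  then show ?case using sym_cell_adj by (meson converse_rtrancl_into_rtrancl)
qed

lemma hook_move:
  fixes p :: "nat \<Rightarrow> nat" and c x :: int and e :: nat
  assumes P: "is_partition p" and e: "e > 0" and x: "x \<in> beta_row p c"
    and ynot: "x - int e \<notin> beta_row p c"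
  shows "\<exists>q. is_partition q \<and> beta_row q c = insert (x - int e) (beta_row p c - {x})
             \<and> removes_hook e p q"
proof -
  define f where "f k = int (p k) - int k + c" for k
  define y where "y = x - int e"
  obtain r where r: "x = f r" using x by (auto simp: beta_row_mem f_def)
  obtain N where N: "\<forall>i\<ge>N. p i = 0" using part_zero[OF P] by blast
  have fnot: "f k \<noteq> y" for k using ynot unfolding y_def beta_row_mem f_def by metis
  have fs: "f k < f i \<longleftrightarrow> i < k" for i k using part_strict_iff[OF P] f_def by simp
  have fle: "i \<le> k \<Longrightarrow> f k \<le> f i" for i k using fs[of i k] by (cases "i = k") auto
  define K where "K = {k. y < f k}"
  have finK: "finite K"
  proof (rule finite_subset)
    show "K \<subseteq> {..< max N (nat (c - y) + 1)}"
    proof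
      fix k assume k: "k \<in> K"
      show "k \<in> {..< max N (nat (c - y) + 1)}"
      proof (rule ccontr)
        assume "\<not> ?thesis"
        then have "p k = 0" "int k \<ge> c - y + 1" using N by auto
        then show False using k by (auto simp: K_def f_def)
      qed
    qed
  qed simp
  have rK: "r \<in> K" using r e by (auto simp: K_def y_def)
  define s where "s = Max K"
  have rs: "r \<le> s" using rK finK s_def by simp
  have sK: "y < f s" using Max_in[OF finK] rK s_def K_def by auto
  have s1: "f (Suc s) < y"
  proof -
    have "Suc s \<notin> K" using Max_ge[OF finK] s_def by fastforce
    then show ?thesis using fnot[of "Suc s"] by (auto simp: K_def)
  qed
  have Kdown: "k \<le> s \<Longrightarrow> y < f k" for k using fle[of k s] sK by simp
  have ps: "p s \<ge> 1"
  proof (rule ccontr)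
    assume "\<not> ?thesis" then have "p s = 0" by simp
    moreover have "p (Suc s) = 0" using part_mono[OF P, of s "Suc s"] calculation by simp
    ultimately show False using sK s1 by (simp add: f_def)
  qed
  define q where "q i = (if i < r then p i else if i < s then p (Suc i) - 1
                         else if i = s then nat (y + int s - c) else p i)" for i
  have qs: "int (q s) = y + int s - c"
  proof -
    have "y + int s - c \<ge> 0" using s1 by (simp add: f_def)
    then show ?thesis using rs by (simp add: q_def)
  qed
  have qmid: "r \<le> i \<Longrightarrow> i < s \<Longrightarrow> int (q i) = int (p (Suc i)) - 1" for i
  proof -
    assume a: "r \<le> i" "i < s"
    have "p (Suc i) \<ge> p s" using part_mono[OF P, of "Suc i" s] a by simp
    then show ?thesis using a ps by (simp add: q_def)
  qed
  have qlow: "i < r \<Longrightarrow> q i = p i" for i by (simp add: q_def)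
  have qhigh: "s < i \<Longrightarrow> q i = p i" for i using rs by (simp add: q_def)
  have pm: "i \<le> k \<Longrightarrow> int (p k) \<le> int (p i)" for i k using part_mono[OF P] by simp
  have sKs: "int (p s) - int s + c > y" using sK by (simp add: f_def)
  have s1s: "int (p (Suc s)) - int (Suc s) + c < y" using s1 by (simp add: f_def)
  have qmono: "int (q (Suc i)) \<le> int (q i)" for i
  proof -
    consider "Suc i < r" | "Suc i = r" "r < s" | "Suc i = r" "r = s"
      | "r \<le> i" "Suc i < s" | "r \<le> i" "Suc i = s" | "i = s" | "s < i"
      using rs by linarith
    then show ?thesis
    proof cases
      case 1 then show ?thesis using qlow pm[of i "Suc i"] by simp
    next
      case 2 then show ?thesis using qlow[of i] qmid[of "Suc i"] pm[of i "Suc (Suc i)"] by simp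
    next
      case 3 then show ?thesis using qlow[of i] qs sKs pm[of i "Suc i"] by simp
    next
      case 4 then show ?thesis using qmid[of i] qmid[of "Suc i"] pm[of "Suc i" "Suc (Suc i)"] by simp
    next
      case 5 then show ?thesis using qmid[of i] qs sKs by simp
    next
      case 6 then show ?thesis using qhigh[of "Suc i"] qs s1s by simp
    next
      case 7 then show ?thesis using qhigh[of i] qhigh[of "Suc i"] pm[of i "Suc i"] by simp
    qed
  qed
  have Q: "is_partition q"
    unfolding is_partition_def
  proof (intro conjI allI exI[of _ "max N (Suc s)"])
    fix i show "q (Suc i) \<le> q i" using qmono[of i] by simp
  next
    fix i show "max N (Suc s) \<le> i \<longrightarrow> q i = 0" using qhigh N by auto
  qed
  have fq: "int (q i) - int i + c = (if i < r then f i else if i < s then f (Suc i)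
              else if i = s then y else f i)" for i
    using qlow[of i] qmid[of i] qs qhigh[of i] by (auto simp: f_def)
  have beq: "beta_row q c = insert y (beta_row p c - {x})"
  proof (intro set_eqI iffI)
    fix z assume "z \<in> beta_row q c"
    then obtain i where i: "z = int (q i) - int i + c" unfolding beta_row_mem by blast
    have finj: "f a = f b \<longleftrightarrow> a = b" for a b using fs[of a b] fs[of b a]
      by (cases "a < b"; cases "b < a") auto
    have fmem: "\<And>k. f k \<in> beta_row p c" unfolding beta_row_mem f_def by blast
    show "z \<in> insert y (beta_row p c - {x})"
      using i fq[of i] r finj rs by (auto split: if_splits simp: fmem)
  next
    fix z assume z: "z \<in> insert y (beta_row p c - {x})"
    show "z \<in> beta_row q c"
    proof (cases "z = y")
      case True
      have "int (q s) - int s + c = y" using fq[of s] rs by simp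
      then show ?thesis using True unfolding beta_row_mem by metis
    next
      case False
      have zz: "z \<in> beta_row p c" "z \<noteq> x" using z False by auto
      then obtain k where k0: "z = f k" unfolding beta_row_mem f_def by blast
      have k: "z = f k" "k \<noteq> r" using k0 zz(2) r by auto
      consider "k < r" | "r < k" "k \<le> s" | "s < k" using k(2) by linarith
      then show ?thesis
      proof cases
        case 1 then show ?thesis using fq[of k] k unfolding beta_row_mem by metis
      next
        case 2
        then have "int (q (k - 1)) - int (k - 1) + c = z" using fq[of "k - 1"] k by auto
        then show ?thesis unfolding beta_row_mem by metis
      next
        case 3 then show ?thesis using fq[of k] k rs unfolding beta_row_mem by (metis not_less_iff_gr_or_eq less_trans)
      qed
    qed
  qed
  have qle: "q i \<le> p i" for i
  proof -
    consider "i < r" | "r \<le> i" "i < s" | "i = s" | "s < i" by linarith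
    then show ?thesis
    proof cases
      case 2 then show ?thesis using qmid[of i] pm[of i "Suc i"] by simp
    next
      case 3 then show ?thesis using qs sKs by simp
    qed (auto simp: qlow qhigh)
  qed
  have rowne: "r \<le> i \<Longrightarrow> i \<le> s \<Longrightarrow> q i < p i" for i
  proof -
    assume a: "r \<le> i" "i \<le> s"
    show ?thesis
    proof (cases "i < s")
      case True then show ?thesis using a qmid[of i] pm[of "Suc i" "Suc s"] s1s sKs
        pm[of i "Suc i"] pm[of "Suc i" s]
        by simp
    next
      case False then show ?thesis using a qs sKs by simp
    qed
  qed
  define S where "S = diagram p - diagram q"
  have Smem: "(i, j) \<in> S \<longleftrightarrow> r \<le> i \<and> i \<le> s \<and> q i \<le> j \<and> j < p i" for i j
  proof -
    have "(i, j) \<in> S \<longleftrightarrow> q i \<le> j \<and> j < p i" by (auto simp: S_def diagram_def)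
    moreover have "q i < p i \<Longrightarrow> r \<le> i \<and> i \<le> s" using qlow qhigh
      by (metis less_irrefl not_le)
    ultimately show ?thesis by auto
  qed
  have Ssig: "S = Sigma {r..s} (\<lambda>i. {q i..<p i})" using Smem by auto
  have diff_eq: "i < s \<Longrightarrow> r \<le> i \<Longrightarrow> int (p i) - int (q i) = f i - f (Suc i)" for i
    using qmid by (simp add: f_def)
  have tele: "r \<le> s' \<Longrightarrow> s' \<le> s \<Longrightarrow> (\<Sum>i\<in>{r..<s'}. int (p i) - int (q i)) = f r - f s'" for s'
  proof (induction s')
    case 0 then show ?case by simp
  next
    case (Suc s')
    show ?case
    proof (cases "r \<le> s'")
      case True
      then have "(\<Sum>i\<in>{r..<Suc s'}. int (p i) - int (q i))
          = (\<Sum>i\<in>{r..<s'}. int (p i) - int (q i)) + (int (p s') - int (q s'))"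
        by simp
      also have "\<dots> = f r - f (Suc s')" using Suc True diff_eq[of s'] by simp
      finally show ?thesis .
    next
      case False then have "r = Suc s'" using Suc by simp
      then show ?thesis by simp
    qed
  qed
  have "int (card S) = (\<Sum>i\<in>{r..s}. int (p i - q i))"
    unfolding Ssig by (simp add: card_SigmaI)
  also have "\<dots> = (\<Sum>i\<in>{r..s}. int (p i) - int (q i))"
    using qle by (intro sum.cong) (auto simp: of_nat_diff)
  also have "\<dots> = (\<Sum>i\<in>{r..<s}. int (p i) - int (q i)) + (int (p s) - int (q s))"
    using rs by (simp add: atLeastLessThanSuc_atLeastAtMost[symmetric])
  also have "\<dots> = int e" using tele[of s] rs qs r by (simp add: f_def y_def)
  finally have cardS: "card S = e" by simp
  have no22: "\<not> (\<exists>i j. {(i, j), (Suc i, j), (i, Suc j), (Suc i, Suc j)} \<subseteq> S)"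
  proof
    assume "\<exists>i j. {(i, j), (Suc i, j), (i, Suc j), (Suc i, Suc j)} \<subseteq> S"
    then obtain i j where "(i, j) \<in> S" "(Suc i, Suc j) \<in> S" by auto
    then have a: "r \<le> i" "Suc i \<le> s" "q i \<le> j" "Suc j < p (Suc i)" using Smem by auto
    then show False using qmid[of i] by simp
  qed
  define R where "R = cell_adj S"
  have adj: "a \<in> S \<Longrightarrow> b \<in> S \<Longrightarrow> \<bar>int (fst a) - int (fst b)\<bar> + \<bar>int (snd a) - int (snd b)\<bar> = 1
     \<Longrightarrow> (a, b) \<in> R\<^sup>*" for a b unfolding R_def cell_adj_def by auto
  have roww: "(i, j) \<in> S \<Longrightarrow> ((i, j), (i, q i)) \<in> R\<^sup>*" for i j
  proof (induction j)
    case 0 then have "q i = 0" using Smem by simp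
    then show ?case by simp
  next
    case (Suc j)
    show ?case
    proof (cases "q i = Suc j")
      case True then show ?thesis by simp
    next
      case False
      then have "(i, j) \<in> S" using Suc.prems Smem by auto
      moreover have "((i, Suc j), (i, j)) \<in> R\<^sup>*" using adj[of "(i, Suc j)" "(i, j)"] Suc.prems calculation by simp
      ultimately show ?thesis using Suc.IH by (meson rtrancl_trans)
    qed
  qed
  define z where "z = (s, q s)"
  have down: "r \<le> i \<Longrightarrow> i \<le> s \<Longrightarrow> ((i, q i), z) \<in> R\<^sup>*" for i
  proof (induction "s - i" arbitrary: i)
    case 0 then have "i = s" by simp
    then show ?case by (simp add: z_def)
  next
    case (Suc d)
    then have iss: "i < s" by simp
    have m1: "(i, q i) \<in> S" using Suc.prems rowne Smem by simp
    have qi: "q i = p (Suc i) - 1" using qmid[of i] Suc.prems iss by simp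
    have pS: "p (Suc i) \<ge> 1" using part_mono[OF P, of "Suc i" s] iss ps by simp
    have m2: "(Suc i, p (Suc i) - 1) \<in> S" using Smem rowne[of "Suc i"] iss Suc.prems pS by auto
    have "((i, q i), (Suc i, p (Suc i) - 1)) \<in> R\<^sup>*" using adj[OF m1 m2] qi by simp
    moreover have "((Suc i, p (Suc i) - 1), (Suc i, q (Suc i))) \<in> R\<^sup>*" using roww[OF m2] .
    moreover have "((Suc i, q (Suc i)), z) \<in> R\<^sup>*" using Suc.hyps(1)[of "Suc i"] Suc.hyps(2) Suc.prems iss by simp
    ultimately show ?case by (meson rtrancl_trans)
  qed
  have toz: "a \<in> S \<Longrightarrow> (a, z) \<in> R\<^sup>*" for a
  proof -
    assume a: "a \<in> S"
    obtain i j where ij: "a = (i, j)" by fastforce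
    then have "r \<le> i" "i \<le> s" using a Smem by auto
    then show ?thesis using roww[of i j] down[of i] a ij by (meson rtrancl_trans)
  qed
  have conn: "\<forall>a\<in>S. \<forall>b\<in>S. (a, b) \<in> R\<^sup>*"
    using toz rtrancl_sym_cell_adj unfolding R_def by (meson rtrancl_trans)
  have dsub: "diagram q \<subseteq> diagram p" using qle by (auto simp: diagram_def intro: less_le_trans)
  have "removes_hook e p q"
    unfolding removes_hook_def Let_def S_def[symmetric] R_def[symmetric]
    using P Q dsub cardS conn no22 by blast
  then show ?thesis using Q beq y_def by blast
qed

lemma stair_part: "is_partition (stair t)"
  unfolding is_partition_def stair_def by (intro conjI allI exI[of _ t]) auto

lemma diagram_stair: "diagram (stair t) = {(i, j). i + j < t}"
  unfolding diagram_def stair_def by (auto split: if_splits)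

lemma card2_adj:
  assumes c: "card S = 2" and conn: "\<forall>x\<in>S. \<forall>y\<in>S. (x, y) \<in> (cell_adj S)\<^sup>*"
  shows "\<exists>u v. S = {u, v} \<and> (u, v) \<in> cell_adj S"
proof -
  obtain u v where uv: "S = {u, v}" "u \<noteq> v" using c by (metis card_2_iff)
  have "(u, v) \<in> (cell_adj S)\<^sup>*" using conn uv by auto
  then obtain w where w: "(u, w) \<in> cell_adj S" "(w, v) \<in> (cell_adj S)\<^sup>*"
    using uv(2) by (metis converse_rtranclE)
  have "w \<in> S" using w(1) unfolding cell_adj_def by auto
  moreover have "w \<noteq> u" using w(1) unfolding cell_adj_def by auto
  ultimately have "w = v" using uv by auto
  then show ?thesis using uv w by blast
qed

lemma adj_cases:
  assumes "\<bar>int a - int c\<bar> + \<bar>int b - int d\<bar> = 1"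
  shows "(c = Suc a \<and> d = b) \<or> (a = Suc c \<and> d = b) \<or> (a = c \<and> d = Suc b) \<or> (a = c \<and> b = Suc d)"
  using assms by arith

lemma stair_no_hook2: "\<not> removes_hook 2 (stair t) q"
proof
  assume h: "removes_hook 2 (stair t) q"
  define S where "S = diagram (stair t) - diagram q"
  have Q: "is_partition q" and sub: "diagram q \<subseteq> diagram (stair t)"
    and c: "card S = 2" and conn: "\<forall>x\<in>S. \<forall>y\<in>S. (x, y) \<in> (cell_adj S)\<^sup>*"
    using h unfolding removes_hook_def Let_def S_def by auto
  obtain u v where uv: "S = {u, v}" "(u, v) \<in> cell_adj S" using card2_adj[OF c conn] by blast
  obtain a b where u: "u = (a, b)" by fastforce
  obtain a' b' where v: "v = (a', b')" by fastforce
  have adj: "\<bar>int a - int a'\<bar> + \<bar>int b - int b'\<bar> = 1"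
    using uv(2) u v unfolding cell_adj_def by auto
  have Smem: "(i, j) \<in> S \<longleftrightarrow> i + j < t \<and> \<not> j < q i" for i j
    unfolding S_def diagram_stair by (auto simp: diagram_def)
  have inS: "(a, b) \<in> S" "(a', b') \<in> S" using uv u v by auto
  have qm: "q (Suc i) \<le> q i" for i using Q unfolding is_partition_def by auto
  have key: "(i, j) \<in> S \<Longrightarrow> (i, Suc j) \<in> S \<Longrightarrow> False" for i j
  proof -
    assume a1: "(i, j) \<in> S" "(i, Suc j) \<in> S"
    have "(Suc i, j) \<notin> S" using a1 uv by (metis Pair_inject Suc_n_not_n insert_iff singletonD)
    then have "j < q (Suc i)" using a1 Smem by auto
    then show False using a1 qm[of i] Smem by auto
  qed
  have key2: "(i, j) \<in> S \<Longrightarrow> (Suc i, j) \<in> S \<Longrightarrow> False" for i j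
  proof -
    assume a1: "(i, j) \<in> S" "(Suc i, j) \<in> S"
    have "(i, Suc j) \<notin> S" using a1 uv by (metis Pair_inject Suc_n_not_n insert_iff singletonD)
    then have "Suc j < q i" using a1 Smem by auto
    then show False using a1 Smem by auto
  qed
  show False using adj_cases[OF adj] inS key key2 by auto
qed

definition Dsg :: "(nat \<Rightarrow> nat) \<Rightarrow> int" where
  "Dsg p = (\<Sum>(i, j)\<in>diagram p. (-1) ^ (i + j))"

lemma finite_diagram: "is_partition p \<Longrightarrow> finite (diagram p)"
proof -
  assume P: "is_partition p"
  obtain N where N: "\<forall>i\<ge>N. p i = 0" using part_zero[OF P] by blast
  have "diagram p \<subseteq> {..<N} \<times> {..<p 0}"
  proof
    fix x assume x: "x \<in> diagram p"
    obtain i j where ij: "x = (i, j)" by fastforce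
    then have "j < p i" using x by (auto simp: diagram_def)
    moreover have "p i \<le> p 0" using part_mono[OF P] by simp
    moreover have "i < N" using N calculation by (metis not_le not_less0)
    ultimately show "x \<in> {..<N} \<times> {..<p 0}" using ij by auto
  qed
  then show ?thesis by (rule finite_subset) simp
qed

lemma Dsg_hook2:
  assumes h: "removes_hook 2 p q"
  shows "Dsg p = Dsg q"
proof -
  define S where "S = diagram p - diagram q"
  have P: "is_partition p" and sub: "diagram q \<subseteq> diagram p"
    and c: "card S = 2" and conn: "\<forall>x\<in>S. \<forall>y\<in>S. (x, y) \<in> (cell_adj S)\<^sup>*"
    using h unfolding removes_hook_def Let_def S_def by auto
  obtain u v where uv: "S = {u, v}" "(u, v) \<in> cell_adj S" using card2_adj[OF c conn] by blast
  have ne: "u \<noteq> v" using uv(2) unfolding cell_adj_def by auto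
  obtain a b where u: "u = (a, b)" by fastforce
  obtain a' b' where v: "v = (a', b')" by fastforce
  have adj: "\<bar>int a - int a'\<bar> + \<bar>int b - int b'\<bar> = 1"
    using uv(2) u v unfolding cell_adj_def by auto
  have sg: "(-1::int) ^ (a + b) + (-1) ^ (a' + b') = 0"
    using adj_cases[OF adj] by (auto simp: power_add)
  have fin: "finite (diagram p)" by (rule finite_diagram[OF P])
  have "Dsg p = (\<Sum>(i, j)\<in>diagram q. (-1) ^ (i + j)) + (\<Sum>(i, j)\<in>S. (-1) ^ (i + j))"
    unfolding Dsg_def S_def using sum.subset_diff[OF sub fin, of "\<lambda>(i, j). (-1::int) ^ (i + j)"]
    by (simp add: add.commute)
  also have "(\<Sum>(i, j)\<in>S. (-1::int) ^ (i + j)) = 0" using uv(1) ne u v sg by simp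
  finally show ?thesis by (simp add: Dsg_def)
qed

lemma Dsg_rtrancl:
  "(p, q) \<in> {(a, b). removes_hook 2 a b}\<^sup>* \<Longrightarrow> Dsg p = Dsg q"
  by (induction rule: rtrancl_induct) (auto dest: Dsg_hook2)

lemma Dsg_stair: "Dsg (stair t) = (if even t then - (int t div 2) else (int t + 1) div 2)"
proof (induction t)
  case 0 then show ?case by (simp add: Dsg_def diagram_stair)
next
  case (Suc t)
  define A where "A = (\<lambda>i. (i, t - i)) ` {..t}"
  have un: "diagram (stair (Suc t)) = diagram (stair t) \<union> A"
    unfolding diagram_stair A_def by (auto simp: less_Suc_eq image_iff) 
  have disj: "diagram (stair t) \<inter> A = {}" unfolding diagram_stair A_def by auto
  have fin: "finite (diagram (stair t))" by (rule finite_diagram[OF stair_part])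
  have finA: "finite A" unfolding A_def by simp
  have "(\<Sum>(i, j)\<in>A. (-1::int) ^ (i + j)) = (\<Sum>i\<in>{..t}. (-1) ^ t)"
    unfolding A_def by (subst sum.reindex) (auto simp: inj_on_def)
  also have "\<dots> = (int t + 1) * (-1) ^ t" by simp
  finally have sA: "(\<Sum>(i, j)\<in>A. (-1::int) ^ (i + j)) = (int t + 1) * (-1) ^ t" .
  have "Dsg (stair (Suc t)) = Dsg (stair t) + (int t + 1) * (-1) ^ t"
    unfolding Dsg_def un using sum.union_disjoint[OF fin finA disj, of "\<lambda>(i, j). (-1::int) ^ (i + j)"] sA
    by simp
  then show ?case using Suc by (auto elim!: evenE oddE)
qed

lemma core2_unique:
  assumes "has_core 2 p (stair a)" "has_core 2 p (stair b)"
  shows "a = b"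
proof -
  have "Dsg p = Dsg (stair a)" "Dsg p = Dsg (stair b)"
    using assms Dsg_rtrancl unfolding has_core_def by blast+
  then have "Dsg (stair a) = Dsg (stair b)" by simp
  then show ?thesis unfolding Dsg_stair
    by (auto split: if_splits elim!: evenE oddE)
qed

definition mrg :: "int set \<Rightarrow> int set \<Rightarrow> int set" where
  "mrg C1 C2 = {2 * j + 1 | j. j \<in> C1} \<union> {2 * j | j. j \<in> C2}"

lemma mrg_mem: "z \<in> mrg C1 C2 \<longleftrightarrow> (odd z \<and> (z - 1) div 2 \<in> C1) \<or> (even z \<and> z div 2 \<in> C2)"
proof
  assume "z \<in> mrg C1 C2"
  then show "(odd z \<and> (z - 1) div 2 \<in> C1) \<or> (even z \<and> z div 2 \<in> C2)"
    unfolding mrg_def by auto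
next
  assume a: "(odd z \<and> (z - 1) div 2 \<in> C1) \<or> (even z \<and> z div 2 \<in> C2)"
  show "z \<in> mrg C1 C2"
  proof (cases "odd z")
    case True
    then have "z = 2 * ((z - 1) div 2) + 1" by presburger
    then show ?thesis using a True unfolding mrg_def by blast
  next
    case False
    then have "z = 2 * (z div 2)" by presburger
    then show ?thesis using a False unfolding mrg_def by blast
  qed
qed

lemma mrg_odd[simp]: "2 * j + 1 \<in> mrg C1 C2 \<longleftrightarrow> j \<in> C1"
  unfolding mrg_mem by simp

lemma mrg_even[simp]: "2 * j \<in> mrg C1 C2 \<longleftrightarrow> j \<in> C2"
  unfolding mrg_mem by simp

lemma shift_beta: "(\<lambda>x. x + d) ` beta_row p c = beta_row p (c + d)"
proof (intro set_eqI iffI)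
  fix z assume "z \<in> (\<lambda>x. x + d) ` beta_row p c"
  then obtain w where "w \<in> beta_row p c" "z = w + d" by blast
  then obtain i where "z = int (p i) - int i + c + d" unfolding beta_row_mem by blast
  then have "z = int (p i) - int i + (c + d)" by simp
  then show "z \<in> beta_row p (c + d)" unfolding beta_row_mem by blast
next
  fix z assume "z \<in> beta_row p (c + d)"
  then obtain i where "z = int (p i) - int i + (c + d)" unfolding beta_row_mem by blast
  then have "z = (int (p i) - int i + c) + d" "int (p i) - int i + c \<in> beta_row p c"
    unfolding beta_row_mem by auto
  then show "z \<in> (\<lambda>x. x + d) ` beta_row p c" by blast
qed

lemma mrg_shift2: "(\<lambda>x. x + 2 * k) ` mrg C1 C2 = mrg ((\<lambda>x. x + k) ` C1) ((\<lambda>x. x + k) ` C2)"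
proof (intro set_eqI iffI)
  fix z assume "z \<in> (\<lambda>x. x + 2 * k) ` mrg C1 C2"
  then obtain w where w: "w \<in> mrg C1 C2" "z = w + 2 * k" by blast
  then consider j where "j \<in> C1" "w = 2 * j + 1" | j where "j \<in> C2" "w = 2 * j"
    unfolding mrg_def by blast
  then show "z \<in> mrg ((\<lambda>x. x + k) ` C1) ((\<lambda>x. x + k) ` C2)"
  proof cases
    case 1 then have "z = 2 * (j + k) + 1" "j + k \<in> (\<lambda>x. x + k) ` C1" using w by auto
    then show ?thesis unfolding mrg_def by blast
  next
    case 2 then have "z = 2 * (j + k)" "j + k \<in> (\<lambda>x. x + k) ` C2" using w by auto
    then show ?thesis unfolding mrg_def by blast
  qed
next
  fix z assume "z \<in> mrg ((\<lambda>x. x + k) ` C1) ((\<lambda>x. x + k) ` C2)"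
  then consider j where "j \<in> C1" "z = 2 * (j + k) + 1" | j where "j \<in> C2" "z = 2 * (j + k)"
    unfolding mrg_def by blast
  then show "z \<in> (\<lambda>x. x + 2 * k) ` mrg C1 C2"
  proof cases
    case 1 then have "z = (2 * j + 1) + 2 * k" "2 * j + 1 \<in> mrg C1 C2" by auto
    then show ?thesis by blast
  next
    case 2 then have "z = (2 * j) + 2 * k" "2 * j \<in> mrg C1 C2" by auto
    then show ?thesis by blast
  qed
qed

lemma mrg_shift1: "(\<lambda>x. x + 1) ` mrg C1 C2 = mrg C2 ((\<lambda>x. x + 1) ` C1)"
proof (intro set_eqI iffI)
  fix z assume "z \<in> (\<lambda>x. x + 1) ` mrg C1 C2"
  then obtain w where w: "w \<in> mrg C1 C2" "z = w + 1" by blast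
  then consider j where "j \<in> C1" "w = 2 * j + 1" | j where "j \<in> C2" "w = 2 * j"
    unfolding mrg_def by blast
  then show "z \<in> mrg C2 ((\<lambda>x. x + 1) ` C1)"
  proof cases
    case 1 then have "z = 2 * (j + 1)" "j + 1 \<in> (\<lambda>x. x + 1) ` C1" using w by auto
    then show ?thesis unfolding mrg_def by blast
  next
    case 2 then have "z = 2 * j + 1" using w by auto
    then show ?thesis using 2 unfolding mrg_def by blast
  qed
next
  fix z assume "z \<in> mrg C2 ((\<lambda>x. x + 1) ` C1)"
  then consider j where "j \<in> C2" "z = 2 * j + 1" | j where "j \<in> C1" "z = 2 * (j + 1)"
    unfolding mrg_def by blast
  then show "z \<in> (\<lambda>x. x + 1) ` mrg C1 C2"
  proof cases
    case 1 then have "z = (2 * j) + 1" "2 * j \<in> mrg C1 C2" by auto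
    then show ?thesis by blast
  next
    case 2 then have "z = (2 * j + 1) + 1" "2 * j + 1 \<in> mrg C1 C2" by auto
    then show ?thesis by blast
  qed
qed

lemma abacus_part_shift:
  "is_partition p \<Longrightarrow> abacus_part ((\<lambda>x. x + d) ` beta_row p c) = p"
  by (simp add: shift_beta abacus_part_beta)

lemma beta_low: "is_partition r \<Longrightarrow> \<exists>a. \<forall>x<a. x \<in> beta_row r k"
proof -
  assume P: "is_partition r"
  obtain N where N: "\<forall>i\<ge>N. r i = 0" using part_zero[OF P] by blast
  have "x \<in> beta_row r k" if "x < k - int N" for x
  proof -
    have "nat (k - x) \<ge> N" using that by auto
    then have "x = int (r (nat (k - x))) - int (nat (k - x)) + k" using N that by auto
    then show ?thesis unfolding beta_row_mem by blast
  qed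
  then show ?thesis by blast
qed

lemma beta_up: "is_partition r \<Longrightarrow> x \<in> beta_row r k \<Longrightarrow> x \<le> int (r 0) + k"
proof -
  assume P: "is_partition r" and "x \<in> beta_row r k"
  then obtain i where "x = int (r i) - int i + k" unfolding beta_row_mem by blast
  moreover have "r i \<le> r 0" using part_mono[OF P] by simp
  ultimately show ?thesis by simp
qed

lemma mrg_beta:
  assumes P1: "is_partition r1" and P2: "is_partition r2"
  shows "\<exists>l. is_partition l \<and> mrg (beta_row r1 k1) (beta_row r2 k2) = beta_row l (k1 + k2 + 1)"
proof -
  define M where "M = mrg (beta_row r1 k1) (beta_row r2 k2)"
  obtain a1 where a1: "\<forall>x<a1. x \<in> beta_row r1 k1" using beta_low[OF P1] by blast
  obtain a2 where a2: "\<forall>x<a2. x \<in> beta_row r2 k2" using beta_low[OF P2] by blast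
  define a where "a = 2 * min a1 a2"
  have low: "{x. x < a} \<subseteq> M"
  proof
    fix x assume "x \<in> {x. x < a}"
    then have x: "x < a" by simp
    show "x \<in> M"
    proof (cases "even x")
      case True
      then have "x div 2 < a2" using x a_def by auto
      then show ?thesis using a2 True unfolding M_def mrg_mem by auto
    next
      case False
      then have "(x - 1) div 2 < a1" using x a_def by auto
      then show ?thesis using a1 False unfolding M_def mrg_mem by auto
    qed
  qed
  define U where "U = max (2 * (int (r1 0) + k1) + 1) (2 * (int (r2 0) + k2))"
  have "M \<inter> {a..} \<subseteq> {a..U}"
  proof
    fix x assume x: "x \<in> M \<inter> {a..}"
    have "x \<le> U"
    proof (cases "even x")
      case True
      then have "x div 2 \<in> beta_row r2 k2" using x mrg_mem[of x] unfolding M_def by auto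
      then have "x div 2 \<le> int (r2 0) + k2" using beta_up[OF P2] by blast
      then show ?thesis using True U_def by (auto elim!: evenE)
    next
      case False
      then have "(x - 1) div 2 \<in> beta_row r1 k1" using x mrg_mem[of x] unfolding M_def by auto
      then have "(x - 1) div 2 \<le> int (r1 0) + k1" using beta_up[OF P1] by blast
      then show ?thesis using False U_def by (auto elim!: oddE)
    qed
    then show "x \<in> {a..U}" using x by auto
  qed
  then have fin: "finite (M \<inter> {a..})" using finite_subset by blast
  obtain l c where L: "is_partition l" "M = beta_row l c" using abacus_exists[OF low fin] by blast
  obtain T0 where T0: "\<forall>T\<le>T0. card (beta_row l c \<inter> {T..}) = nat (c - T) + 1"
    using count_beta_ex[OF L(1)] by blast
  obtain T1 where T1: "\<forall>T\<le>T1. card (beta_row r1 k1 \<inter> {T..}) = nat (k1 - T) + 1"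
    using count_beta_ex[OF P1] by blast
  obtain T2 where T2: "\<forall>T\<le>T2. card (beta_row r2 k2 \<inter> {T..}) = nat (k2 - T) + 1"
    using count_beta_ex[OF P2] by blast
  define K where "K = \<bar>T0\<bar> + \<bar>T1\<bar> + \<bar>T2\<bar> + \<bar>k1\<bar> + \<bar>k2\<bar> + \<bar>c\<bar> + 1"
  define C1 where "C1 = beta_row r1 k1 \<inter> {-K..}"
  define C2 where "C2 = beta_row r2 k2 \<inter> {-K..}"
  have K1: "-K \<le> T1" "-K \<le> T2" "-2*K \<le> T0" "0 \<le> k1 + K" "0 \<le> k2 + K" "0 \<le> c + 2 * K"
    unfolding K_def by arith+
  have c1: "card C1 = nat (k1 + K) + 1" using T1 K1 C1_def by simp
  have c2: "card C2 = nat (k2 + K) + 1" using T2 K1 C2_def by simp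
  have fin1: "finite C1" using c1 card.infinite by fastforce
  have fin2: "finite C2" using c2 card.infinite by fastforce
  have split: "M \<inter> {-2 * K..} = (\<lambda>j. 2 * j + 1) ` C1 \<union> (\<lambda>j. 2 * j) ` C2"
  proof (intro set_eqI iffI)
    fix x assume x: "x \<in> M \<inter> {-2 * K..}"
    show "x \<in> (\<lambda>j. 2 * j + 1) ` C1 \<union> (\<lambda>j. 2 * j) ` C2"
    proof (cases "even x")
      case True
      then obtain m where m: "x = 2 * m" by (auto elim!: evenE)
      then have "m \<in> C2" using x unfolding M_def C2_def by auto
      then show ?thesis using m by blast
    next
      case False
      then obtain m where m: "x = 2 * m + 1" by (auto elim!: oddE)
      then have "m \<in> C1" using x unfolding M_def C1_def by auto
      then show ?thesis using m by blast
    qed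
  next
    fix x assume "x \<in> (\<lambda>j. 2 * j + 1) ` C1 \<union> (\<lambda>j. 2 * j) ` C2"
    then show "x \<in> M \<inter> {-2 * K..}" unfolding M_def C1_def C2_def by auto
  qed
  have disj: "(\<lambda>j. 2 * j + 1) ` C1 \<inter> (\<lambda>j. 2 * j) ` C2 = {}"
  proof -
    have "2 * j + 1 \<noteq> 2 * j'" for j j' :: int by presburger
    then show ?thesis by blast
  qed
  have "card (M \<inter> {-2 * K..}) = card C1 + card C2"
    unfolding split using fin1 fin2 disj
    by (simp add: card_Un_disjoint card_image inj_on_def)
  moreover have "card (M \<inter> {-2 * K..}) = nat (c + 2 * K) + 1" using T0 L(2) K1 by simp
  moreover note c1 c2
  ultimately have "nat (c + 2 * K) + 1 = nat (k1 + K) + 1 + (nat (k2 + K) + 1)" by simp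
  then have "c = k1 + k2 + 1" using K1 by auto
  then show ?thesis using L M_def by blast
qed

definition PP :: "(nat \<Rightarrow> nat) \<Rightarrow> (nat \<Rightarrow> nat) \<Rightarrow> int \<Rightarrow> int \<Rightarrow> nat \<Rightarrow> nat" where
  "PP r1 r2 k1 k2 = abacus_part (mrg (beta_row r1 k1) (beta_row r2 k2))"

lemma PP_beta:
  assumes "is_partition r1" "is_partition r2"
  shows "is_partition (PP r1 r2 k1 k2) \<and>
         mrg (beta_row r1 k1) (beta_row r2 k2) = beta_row (PP r1 r2 k1 k2) (k1 + k2 + 1)"
proof -
  obtain l where l: "is_partition l" "mrg (beta_row r1 k1) (beta_row r2 k2) = beta_row l (k1 + k2 + 1)"
    using mrg_beta[OF assms] by blast
  then have "PP r1 r2 k1 k2 = l" unfolding PP_def using abacus_part_beta by simp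
  then show ?thesis using l by simp
qed

lemma PP_shift:
  assumes "is_partition r1" "is_partition r2"
  shows "PP r1 r2 (k1 + k) (k2 + k) = PP r1 r2 k1 k2"
proof -
  have "mrg (beta_row r1 (k1 + k)) (beta_row r2 (k2 + k))
      = (\<lambda>x. x + 2 * k) ` mrg (beta_row r1 k1) (beta_row r2 k2)"
    by (simp add: mrg_shift2 shift_beta)
  also have "\<dots> = (\<lambda>x. x + 2 * k) ` beta_row (PP r1 r2 k1 k2) (k1 + k2 + 1)"
    using PP_beta[OF assms] by simp
  finally show ?thesis
    unfolding PP_def[of r1 r2 "k1 + k"] using abacus_part_shift PP_beta[OF assms] by simp
qed

lemma PP_swap:
  assumes "is_partition r1" "is_partition r2"
  shows "PP r2 r1 k2 (k1 + 1) = PP r1 r2 k1 k2"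
proof -
  have "mrg (beta_row r2 k2) (beta_row r1 (k1 + 1))
      = (\<lambda>x. x + 1) ` mrg (beta_row r1 k1) (beta_row r2 k2)"
    by (simp add: mrg_shift1 shift_beta)
  also have "\<dots> = (\<lambda>x. x + 1) ` beta_row (PP r1 r2 k1 k2) (k1 + k2 + 1)"
    using PP_beta[OF assms] by simp
  finally show ?thesis
    unfolding PP_def[of r2 r1] using abacus_part_shift PP_beta[OF assms] by simp
qed

lemma zero_part: "is_partition (\<lambda>_. 0)" unfolding is_partition_def by simp

lemma beta_zero: "beta_row (\<lambda>_. 0) k = {..k}"
proof (intro set_eqI iffI)
  fix x assume "x \<in> beta_row (\<lambda>_. 0) k" then show "x \<in> {..k}" unfolding beta_row_mem by auto
next
  fix x assume "x \<in> {..k}"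
  then have "x = int ((\<lambda>_. 0::nat) (nat (k - x))) - int (nat (k - x)) + k" by simp
  then show "x \<in> beta_row (\<lambda>_. 0) k" unfolding beta_row_mem by blast
qed

lemma beta_stair_mem:
  "z \<in> beta_row (stair d) (int d + 1) \<longleftrightarrow> (odd z \<and> z \<le> 2 * int d + 1) \<or> (even z \<and> z \<le> 0)"
proof
  assume "z \<in> beta_row (stair d) (int d + 1)"
  then obtain i where i: "z = int (stair d i) - int i + (int d + 1)" unfolding beta_row_mem by blast
  show "(odd z \<and> z \<le> 2 * int d + 1) \<or> (even z \<and> z \<le> 0)"
  proof (cases "i < d")
    case True
    then have "z = 2 * (int d - int i) + 1" using i by (simp add: stair_def)
    then show ?thesis using True by auto
  next
    case False
    then have z1: "z \<le> 1" using i False by (simp add: stair_def)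
    show ?thesis
    proof (cases "even z")
      case True
      then have "z \<noteq> 1" by auto
      then show ?thesis using z1 True by simp
    next
      case False then show ?thesis using z1 by simp
    qed
  qed
next
  assume z: "(odd z \<and> z \<le> 2 * int d + 1) \<or> (even z \<and> z \<le> 0)"
  show "z \<in> beta_row (stair d) (int d + 1)"
  proof (cases "z \<ge> 3 \<and> odd z")
    case True
    then obtain m where m: "z = 2 * m + 1" by (auto elim!: oddE)
    define i where "i = nat (int d - m)"
    have "i < d" "m \<le> int d" using True z m i_def by auto
    then have "z = int (stair d i) - int i + (int d + 1)" using m i_def True by (simp add: stair_def)
    then show ?thesis unfolding beta_row_mem by blast
  next
    case False
    have "z \<le> 1"
    proof (cases "even z")
      case True then show ?thesis using z by auto
    next
      case odd: False
      then have "z \<noteq> 2" by auto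
      moreover have "z < 3" using odd False by auto
      ultimately show ?thesis by simp
    qed
    define i where "i = nat (int d + 1 - z)"
    have "\<not> i < d" using i_def \<open>z \<le> 1\<close> by auto
    then have "z = int (stair d i) - int i + (int d + 1)" using i_def \<open>z \<le> 1\<close> by (simp add: stair_def)
    then show ?thesis unfolding beta_row_mem by blast
  qed
qed

lemma PP_base: "PP (\<lambda>_. 0) (\<lambda>_. 0) (int d) 0 = stair d"
proof -
  have "mrg (beta_row (\<lambda>_. 0) (int d)) (beta_row (\<lambda>_. 0) 0) = beta_row (stair d) (int d + 1)"
  proof (intro set_eqI)
    fix z
    show "z \<in> mrg (beta_row (\<lambda>_. 0) (int d)) (beta_row (\<lambda>_. 0) 0) \<longleftrightarrow> z \<in> beta_row (stair d) (int d + 1)"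
    proof (cases "even z")
      case True
      then obtain m where m: "z = 2 * m" by (auto elim!: evenE)
      show ?thesis unfolding beta_stair_mem m mrg_even beta_zero by auto
    next
      case False
      then obtain m where m: "z = 2 * m + 1" by (auto elim!: oddE)
      show ?thesis unfolding beta_stair_mem m mrg_odd beta_zero by auto
    qed
  qed
  then show ?thesis unfolding PP_def using abacus_part_beta[OF stair_part] by simp
qed

lemma hook_abacus:
  assumes P: "is_partition p" and e: "e > 0" and x: "x \<in> beta_row p c"
    and y: "x - int e \<notin> beta_row p c"
  shows "removes_hook e (abacus_part (beta_row p c)) (abacus_part (insert (x - int e) (beta_row p c - {x})))"
proof -
  obtain q where q: "is_partition q" "beta_row q c = insert (x - int e) (beta_row p c - {x})"
    "removes_hook e p q" using hook_move[OF P e x y] by blast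
  have "abacus_part (insert (x - int e) (beta_row p c - {x})) = q"
    using abacus_part_beta[OF q(1), of c] unfolding q(2) .
  then show ?thesis using q(3) abacus_part_beta[OF P] by simp
qed

lemma plength_zero:
  assumes P: "is_partition p" and i: "plength p \<le> i"
  shows "p i = 0"
proof -
  obtain N where N: "\<forall>i\<ge>N. p i = 0" using part_zero[OF P] by blast
  define m where "m = (LEAST i. p i = 0)"
  have ex: "\<exists>i. p i = 0" using N by blast
  have pm: "p m = 0" unfolding m_def by (rule LeastI_ex[OF ex])
  have "{i. p i \<noteq> 0} = {..<m}"
  proof (intro set_eqI iffI)
    fix i assume "i \<in> {i. p i \<noteq> 0}"
    then have "p i \<noteq> 0" by simp
    show "i \<in> {..<m}"
    proof (rule ccontr)
      assume "\<not> ?thesis" then have "m \<le> i" by simp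
      then have "p i \<le> p m" using part_mono[OF P] by blast
      then show False using pm \<open>p i \<noteq> 0\<close> by simp
    qed
  next
    fix i assume "i \<in> {..<m}"
    then show "i \<in> {i. p i \<noteq> 0}" using m_def not_less_Least by auto
  qed
  then have "plength p = m" unfolding plength_def by simp
  then show ?thesis using part_mono[OF P, of m i] pm i by simp
qed

lemma Pi_lemma:
  assumes P: "is_partition b" and neg: "{x. x < 0} \<subseteq> beta_row b k"
  shows "part_of_beta (nat ` (beta_row b k \<inter> {0..})) = b"
proof -
  obtain N where N: "\<forall>i\<ge>N. b i = 0" using part_zero[OF P] by blast
  define s where "s = (LEAST i. b i = 0)"
  have ex: "\<exists>i. b i = 0" using N by blast
  have bs: "b s = 0" unfolding s_def by (rule LeastI_ex[OF ex])
  have bz: "i \<ge> s \<Longrightarrow> b i = 0" for i using part_mono[OF P, of s i] bs by simp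
  have bnz: "i < s \<Longrightarrow> b i \<ge> 1" for i using s_def not_less_Least by fastforce
  have notin: "k - int s + 1 \<notin> beta_row b k"
  proof
    assume "k - int s + 1 \<in> beta_row b k"
    then obtain i where i: "k - int s + 1 = int (b i) - int i + k" unfolding beta_row_mem by blast
    show False
    proof (cases "i < s")
      case True then show False using i bnz[of i] by simp
    next
      case False then show False using i bz[of i] by simp
    qed
  qed
  have ks: "k - int s + 1 \<ge> 0"
  proof (rule ccontr)
    assume "\<not> ?thesis" then have "k - int s + 1 \<in> {x. x < 0}" by simp
    then show False using neg notin by blast
  qed
  define m where "m = nat (k + 1)"
  have ms: "s \<le> m" using ks m_def by auto
  have zm: "\<forall>i\<ge>m. b i = 0" using bz ms by auto
  have km: "int m - 1 = k" using ks m_def by auto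
  have "beta_row b k = int ` beta_nat b m \<union> {x. x < 0}" using beta_row_nat[OF P zm] km by simp
  then have "beta_row b k \<inter> {0..} = int ` beta_nat b m" by auto
  then have "nat ` (beta_row b k \<inter> {0..}) = nat ` int ` beta_nat b m" by simp
  also have "\<dots> = beta_nat b m" by (simp add: image_image)
  finally have "nat ` (beta_row b k \<inter> {0..}) = beta_nat b m" .
  then show ?thesis using part_of_beta_nat[OF P zm] by simp
qed

lemma quot2_mrg:
  assumes L: "is_partition l" and A: "is_partition a" and B: "is_partition b"
    and eq: "beta_row l (2 * int (plength l)) = mrg (beta_row a ka) (beta_row b kb)"
  shows "quot2 l = (b, a)"
proof -
  define n where "n = 2 * plength l + 1"
  have zn: "\<forall>i\<ge>n. l i = 0" using plength_zero[OF L] n_def by auto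
  define Bs where "Bs = beta_nat l n"
  have nn: "int n - 1 = 2 * int (plength l)" using n_def by simp
  have M: "mrg (beta_row a ka) (beta_row b kb) = int ` Bs \<union> {x. x < 0}"
    using beta_row_nat[OF L zn] eq nn Bs_def by simp
  have ev: "{x div 2 | x. x \<in> Bs \<and> even x} = nat ` (beta_row b kb \<inter> {0..})"
  proof (intro set_eqI iffI)
    fix z assume "z \<in> {x div 2 | x. x \<in> Bs \<and> even x}"
    then obtain x where x: "z = x div 2" "x \<in> Bs" "even x" by blast
    then obtain m where m: "x = 2 * m" by (auto elim!: evenE)
    have "int x \<in> int ` Bs" using x(2) by blast
    then have "int x \<in> mrg (beta_row a ka) (beta_row b kb)" using M by auto
    moreover have "int x = 2 * int m" using m by simp
    ultimately have "int m \<in> beta_row b kb" using mrg_even by metis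
    moreover have "z = nat (int m)" using x m by simp
    ultimately show "z \<in> nat ` (beta_row b kb \<inter> {0..})"
      by (intro image_eqI[of _ _ "int m"]) auto
  next
    fix z assume "z \<in> nat ` (beta_row b kb \<inter> {0..})"
    then obtain j where j: "j \<in> beta_row b kb" "j \<ge> 0" "z = nat j" by auto
    have "2 * j \<in> mrg (beta_row a ka) (beta_row b kb)" using j by simp
    then have "2 * j \<in> int ` Bs" using M j by auto
    then obtain x where x: "x \<in> Bs" "2 * j = int x" by auto
    then have "even x" "x div 2 = z" using j by presburger+
    then show "z \<in> {x div 2 | x. x \<in> Bs \<and> even x}" using x by blast
  qed
  have od: "{(x - 1) div 2 | x. x \<in> Bs \<and> odd x} = nat ` (beta_row a ka \<inter> {0..})"
  proof (intro set_eqI iffI)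
    fix z assume "z \<in> {(x - 1) div 2 | x. x \<in> Bs \<and> odd x}"
    then obtain x where x: "z = (x - 1) div 2" "x \<in> Bs" "odd x" by blast
    then obtain m where m: "x = 2 * m + 1" by (auto elim!: oddE)
    have "int x \<in> int ` Bs" using x(2) by blast
    then have "int x \<in> mrg (beta_row a ka) (beta_row b kb)" using M by auto
    moreover have "int x = 2 * int m + 1" using m by simp
    ultimately have "int m \<in> beta_row a ka" using mrg_odd by metis
    moreover have "z = nat (int m)" using x m by simp
    ultimately show "z \<in> nat ` (beta_row a ka \<inter> {0..})"
      by (intro image_eqI[of _ _ "int m"]) auto
  next
    fix z assume "z \<in> nat ` (beta_row a ka \<inter> {0..})"
    then obtain j where j: "j \<in> beta_row a ka" "j \<ge> 0" "z = nat j" by auto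
    have "2 * j + 1 \<in> mrg (beta_row a ka) (beta_row b kb)" using j by simp
    then have "2 * j + 1 \<in> int ` Bs" using M j by auto
    then obtain x where x: "x \<in> Bs" "2 * j + 1 = int x" by auto
    then have "odd x" "(x - 1) div 2 = z" using j by presburger+
    then show "z \<in> {(x - 1) div 2 | x. x \<in> Bs \<and> odd x}" using x by blast
  qed
  have negb: "{x. x < 0} \<subseteq> beta_row b kb"
  proof
    fix j :: int assume "j \<in> {x. x < 0}"
    then have "2 * j \<in> mrg (beta_row a ka) (beta_row b kb)" using M by auto
    then show "j \<in> beta_row b kb" by simp
  qed
  have nega: "{x. x < 0} \<subseteq> beta_row a ka"
  proof
    fix j :: int assume "j \<in> {x. x < 0}"
    then have "2 * j + 1 \<in> mrg (beta_row a ka) (beta_row b kb)" using M by auto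
    then show "j \<in> beta_row a ka" by simp
  qed
  show ?thesis unfolding quot2_def Let_def n_def[symmetric] Bs_def[symmetric] ev od
    using Pi_lemma[OF B negb] Pi_lemma[OF A nega] by simp
qed

lemma PP_quot:
  assumes R1: "is_partition r1" and R2: "is_partition r2"
  shows "quot2_bar d (PP r1 r2 (int d) 0) = (r1, r2)"
proof -
  define l where "l = PP r1 r2 (int d) 0"
  have L: "is_partition l" and Lb: "mrg (beta_row r1 (int d)) (beta_row r2 0) = beta_row l (int d + 1)"
    using PP_beta[OF R1 R2, of "int d" 0] l_def by auto
  define w where "w = 2 * int (plength l) - int d - 1"
  have sh: "beta_row l (2 * int (plength l)) = (\<lambda>x. x + w) ` mrg (beta_row r1 (int d)) (beta_row r2 0)"
    unfolding Lb shift_beta w_def by simp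
  show ?thesis
  proof (cases "even d")
    case False
    have "even w" using False unfolding w_def by simp
    then obtain u where u: "w = 2 * u" by (auto elim!: evenE)
    have "beta_row l (2 * int (plength l)) = mrg (beta_row r1 (int d + u)) (beta_row r2 (0 + u))"
      unfolding sh u mrg_shift2 shift_beta by simp
    then have "quot2 l = (r2, r1)" using quot2_mrg[OF L R1 R2] by blast
    then show ?thesis using False l_def by (simp add: quot2_bar_def)
  next
    case True
    have "odd w" using True unfolding w_def by simp
    then obtain u where u: "w = 2 * u + 1" by (auto elim!: oddE)
    have comp: "(\<lambda>x. x + (2 * u + 1)) ` S = (\<lambda>x. x + 1) ` ((\<lambda>x. x + 2 * u) ` S)" for S :: "int set"
      by (simp add: image_image add.assoc)
    have "beta_row l (2 * int (plength l)) = mrg (beta_row r2 (0 + u)) (beta_row r1 (int d + u + 1))"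
      unfolding sh u comp mrg_shift2 shift_beta mrg_shift1 by simp
    then have "quot2 l = (r1, r2)" using quot2_mrg[OF L R2 R1] by blast
    then show ?thesis using True l_def by (simp add: quot2_bar_def)
  qed
qed

lemma two_ne: "(2::int) * a \<noteq> 2 * b + 1" by presburger

lemma mrg_move1: "mrg (insert y (C1 - {x})) C2 = insert (2 * y + 1) (mrg C1 C2 - {2 * x + 1})"
proof (intro set_eqI)
  fix z
  show "z \<in> mrg (insert y (C1 - {x})) C2 \<longleftrightarrow> z \<in> insert (2 * y + 1) (mrg C1 C2 - {2 * x + 1})"
  proof (cases "even z")
    case True
    then obtain m where m: "z = 2 * m" by (auto elim!: evenE)
    show ?thesis unfolding m mrg_even using two_ne by auto
  next
    case False
    then obtain m where m: "z = 2 * m + 1" by (auto elim!: oddE)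
    show ?thesis unfolding m mrg_odd by auto
  qed
qed

lemma mrg_move2: "mrg C1 (insert y (C2 - {x})) = insert (2 * y) (mrg C1 C2 - {2 * x})"
proof (intro set_eqI)
  fix z
  show "z \<in> mrg C1 (insert y (C2 - {x})) \<longleftrightarrow> z \<in> insert (2 * y) (mrg C1 C2 - {2 * x})"
  proof (cases "even z")
    case True
    then obtain m where m: "z = 2 * m" by (auto elim!: evenE)
    show ?thesis unfolding m mrg_even by auto
  next
    case False
    then obtain m where m: "z = 2 * m + 1" by (auto elim!: oddE)
    have "2 * m + 1 \<noteq> 2 * y" "2 * m + 1 \<noteq> 2 * x" using two_ne by metis+
    then show ?thesis unfolding m mrg_odd by auto
  qed
qed

lemma last_row:
  assumes P: "is_partition r" and nz: "r \<noteq> (\<lambda>_. 0)"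
  shows "\<exists>k. r k > 0 \<and> r (Suc k) = 0"
proof -
  obtain N where N: "\<forall>i\<ge>N. r i = 0" using part_zero[OF P] by blast
  have ex: "\<exists>i. r i = 0" using N by blast
  define s where "s = (LEAST i. r i = 0)"
  have rs: "r s = 0" unfolding s_def by (rule LeastI_ex[OF ex])
  have s0: "s \<noteq> 0"
  proof
    assume "s = 0"
    then have "r i = 0" for i using part_mono[OF P, of 0 i] rs by simp
    then show False using nz by auto
  qed
  then obtain k where k: "s = Suc k" by (cases s) auto
  have "r k \<noteq> 0" using not_less_Least[of k "\<lambda>i. r i = 0"] k s_def by auto
  then show ?thesis using rs k by auto
qed

lemma last_row_gap:
  assumes P: "is_partition r" and k: "r k > 0" "r (Suc k) = 0"
  shows "int (r k) - int k + c - int 1 \<notin> beta_row r c"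
proof
  assume "int (r k) - int k + c - int 1 \<in> beta_row r c"
  then obtain i where i: "int (r k) - int k + c - 1 = int (r i) - int i + c" unfolding beta_row_mem by auto
  show False
  proof (cases "i \<le> k")
    case True
    then have "r k \<le> r i" using part_mono[OF P] by blast
    then show False using i True by simp
  next
    case False
    then have "r i \<le> r (Suc k)" using part_mono[OF P] by simp
    then show False using i False k by simp
  qed
qed

lemma hook1_card:
  assumes h: "removes_hook 1 r q"
  shows "card (diagram q) < card (diagram r)"
proof -
  have P: "is_partition r" and sub: "diagram q \<subseteq> diagram r"
    and c: "card (diagram r - diagram q) = 1"
    using h unfolding removes_hook_def Let_def by auto
  have fin: "finite (diagram r)" by (rule finite_diagram[OF P])
  have "card (diagram r) - card (diagram q) = 1" using card_Diff_subset[OF finite_subset[OF sub fin] sub] c by simp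
  then show ?thesis by simp
qed

lemma PP_step1:
  assumes R1: "is_partition r1" and R2: "is_partition r2" and nz: "r1 \<noteq> (\<lambda>_. 0)"
  shows "\<exists>q. is_partition q \<and> card (diagram q) < card (diagram r1)
            \<and> removes_hook 2 (PP r1 r2 k1 k2) (PP q r2 k1 k2)"
proof -
  obtain k where k: "r1 k > 0" "r1 (Suc k) = 0" using last_row[OF R1 nz] by blast
  define x where "x = int (r1 k) - int k + k1"
  have xin: "x \<in> beta_row r1 k1" unfolding x_def beta_row_mem by blast
  have xnot: "x - int 1 \<notin> beta_row r1 k1" using last_row_gap[OF R1 k] x_def by simp
  obtain q where q: "is_partition q" "beta_row q k1 = insert (x - int 1) (beta_row r1 k1 - {x})"
    "removes_hook 1 r1 q" using hook_move[OF R1 _ xin xnot] by auto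
  define l where "l = PP r1 r2 k1 k2"
  have L: "is_partition l" "mrg (beta_row r1 k1) (beta_row r2 k2) = beta_row l (k1 + k2 + 1)"
    using PP_beta[OF R1 R2] l_def by auto
  have X: "2 * x + 1 \<in> beta_row l (k1 + k2 + 1)" using L(2)[symmetric] xin by simp
  have Xn: "2 * x + 1 - int 2 \<notin> beta_row l (k1 + k2 + 1)"
  proof
    assume a: "2 * x + 1 - int 2 \<in> beta_row l (k1 + k2 + 1)"
    have e: "2 * x + 1 - int 2 = 2 * (x - 1) + 1" by simp
    have "2 * (x - 1) + 1 \<in> mrg (beta_row r1 k1) (beta_row r2 k2)" using a unfolding e L(2) .
    then have "x - 1 \<in> beta_row r1 k1" unfolding mrg_odd .
    then show False using xnot by simp
  qed
  have hk: "removes_hook 2 (abacus_part (beta_row l (k1 + k2 + 1)))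
     (abacus_part (insert (2 * x + 1 - int 2) (beta_row l (k1 + k2 + 1) - {2 * x + 1})))"
    by (rule hook_abacus[OF L(1) _ X Xn]) simp
  have "insert (2 * x + 1 - int 2) (beta_row l (k1 + k2 + 1) - {2 * x + 1})
       = mrg (beta_row q k1) (beta_row r2 k2)"
    unfolding q(2) mrg_move1 L(2)[symmetric] by (simp add: algebra_simps)
  then have "removes_hook 2 l (PP q r2 k1 k2)"
    using hk abacus_part_beta[OF L(1)] unfolding PP_def by simp
  then show ?thesis using q(1) hook1_card[OF q(3)] l_def by blast
qed

lemma PP_step2:
  assumes R1: "is_partition r1" and R2: "is_partition r2" and nz: "r2 \<noteq> (\<lambda>_. 0)"
  shows "\<exists>q. is_partition q \<and> card (diagram q) < card (diagram r2)
            \<and> removes_hook 2 (PP r1 r2 k1 k2) (PP r1 q k1 k2)"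
proof -
  obtain k where k: "r2 k > 0" "r2 (Suc k) = 0" using last_row[OF R2 nz] by blast
  define x where "x = int (r2 k) - int k + k2"
  have xin: "x \<in> beta_row r2 k2" unfolding x_def beta_row_mem by blast
  have xnot: "x - int 1 \<notin> beta_row r2 k2" using last_row_gap[OF R2 k] x_def by simp
  obtain q where q: "is_partition q" "beta_row q k2 = insert (x - int 1) (beta_row r2 k2 - {x})"
    "removes_hook 1 r2 q" using hook_move[OF R2 _ xin xnot] by auto
  define l where "l = PP r1 r2 k1 k2"
  have L: "is_partition l" "mrg (beta_row r1 k1) (beta_row r2 k2) = beta_row l (k1 + k2 + 1)"
    using PP_beta[OF R1 R2] l_def by auto
  have X: "2 * x \<in> beta_row l (k1 + k2 + 1)" using L(2)[symmetric] xin by simp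
  have Xn: "2 * x - int 2 \<notin> beta_row l (k1 + k2 + 1)"
  proof
    assume a: "2 * x - int 2 \<in> beta_row l (k1 + k2 + 1)"
    have e: "2 * x - int 2 = 2 * (x - 1)" by simp
    have "2 * (x - 1) \<in> mrg (beta_row r1 k1) (beta_row r2 k2)" using a unfolding e L(2) .
    then have "x - 1 \<in> beta_row r2 k2" unfolding mrg_even .
    then show False using xnot by simp
  qed
  have hk: "removes_hook 2 (abacus_part (beta_row l (k1 + k2 + 1)))
     (abacus_part (insert (2 * x - int 2) (beta_row l (k1 + k2 + 1) - {2 * x})))"
    by (rule hook_abacus[OF L(1) _ X Xn]) simp
  have "insert (2 * x - int 2) (beta_row l (k1 + k2 + 1) - {2 * x})
       = mrg (beta_row r1 k1) (beta_row q k2)"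
    unfolding q(2) mrg_move2 L(2)[symmetric] by (simp add: algebra_simps)
  then have "removes_hook 2 l (PP r1 q k1 k2)"
    using hk abacus_part_beta[OF L(1)] unfolding PP_def by simp
  then show ?thesis using q(1) hook1_card[OF q(3)] l_def by blast
qed

lemma PP_core:
  assumes R1: "is_partition r1" and R2: "is_partition r2"
  shows "has_core 2 (PP r1 r2 (int d) 0) (stair d)"
  using assms
proof (induction "card (diagram r1) + card (diagram r2)" arbitrary: r1 r2 rule: less_induct)
  case less
  have Lp: "is_partition (PP r1 r2 (int d) 0)" using PP_beta[OF less.prems] by blast
  show ?case
  proof (cases "r1 = (\<lambda>_. 0) \<and> r2 = (\<lambda>_. 0)")
    case True
    then show ?thesis unfolding has_core_def using PP_base stair_part stair_no_hook2 by auto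
  next
    case False
    have "\<exists>q1 q2. is_partition q1 \<and> is_partition q2 \<and>
      card (diagram q1) + card (diagram q2) < card (diagram r1) + card (diagram r2) \<and>
      removes_hook 2 (PP r1 r2 (int d) 0) (PP q1 q2 (int d) 0)"
    proof (cases "r1 = (\<lambda>_. 0)")
      case False
      then obtain q where "is_partition q" "card (diagram q) < card (diagram r1)"
        "removes_hook 2 (PP r1 r2 (int d) 0) (PP q r2 (int d) 0)"
        using PP_step1[OF less.prems False] by blast
      then show ?thesis using less.prems by (intro exI[of _ q] exI[of _ r2]) simp
    next
      case True
      then have "r2 \<noteq> (\<lambda>_. 0)" using False by simp
      then obtain q where "is_partition q" "card (diagram q) < card (diagram r2)"
        "removes_hook 2 (PP r1 r2 (int d) 0) (PP r1 q (int d) 0)"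
        using PP_step2[OF less.prems] by blast
      then show ?thesis using less.prems by (intro exI[of _ r1] exI[of _ q]) simp
    qed
    then obtain q1 q2 where q: "is_partition q1" "is_partition q2"
      "card (diagram q1) + card (diagram q2) < card (diagram r1) + card (diagram r2)"
      "removes_hook 2 (PP r1 r2 (int d) 0) (PP q1 q2 (int d) 0)" by blast
    have "has_core 2 (PP q1 q2 (int d) 0) (stair d)" using less.hyps[OF q(3) q(1) q(2)] .
    then show ?thesis using q(4) Lp unfolding has_core_def
      by (auto intro: converse_rtrancl_into_rtrancl)
  qed
qed

lemma PP_gen1:
  assumes R1: "is_partition r1" and R2: "is_partition r2" and k: "k2 \<le> k1"
  shows "PP r1 r2 k1 k2 = PP r1 r2 (int (nat (k1 - k2))) 0"
  using PP_shift[OF R1 R2, of "int (nat (k1 - k2))" k2 0] k by simp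

lemma PP_gen2:
  assumes R1: "is_partition r1" and R2: "is_partition r2" and k: "k1 < k2"
  shows "PP r1 r2 k1 k2 = PP r2 r1 (int (nat (k2 - k1 - 1))) 0"
proof -
  have "PP r1 r2 k1 k2 = PP r2 r1 k2 (k1 + 1)" using PP_swap[OF R1 R2] by simp
  also have "\<dots> = PP r2 r1 (int (nat (k2 - k1 - 1))) 0"
    using PP_gen1[OF R2 R1, of "k1 + 1" k2] k by (simp add: diff_diff_eq)
  finally show ?thesis .
qed

lemma PP_core_quot:
  assumes R1: "is_partition r1" and R2: "is_partition r2"
  shows "(k2 \<le> k1 \<longrightarrow> has_core 2 (PP r1 r2 k1 k2) (stair (nat (k1 - k2)))
            \<and> quot2_bar (nat (k1 - k2)) (PP r1 r2 k1 k2) = (r1, r2))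
       \<and> (k1 < k2 \<longrightarrow> has_core 2 (PP r1 r2 k1 k2) (stair (nat (k2 - k1 - 1)))
            \<and> quot2_bar (nat (k2 - k1 - 1)) (PP r1 r2 k1 k2) = (r2, r1))"
proof (intro conjI impI)
  assume k: "k2 \<le> k1"
  show "has_core 2 (PP r1 r2 k1 k2) (stair (nat (k1 - k2)))"
    unfolding PP_gen1[OF R1 R2 k] by (rule PP_core[OF R1 R2])
  show "quot2_bar (nat (k1 - k2)) (PP r1 r2 k1 k2) = (r1, r2)"
    unfolding PP_gen1[OF R1 R2 k] by (rule PP_quot[OF R1 R2])
next
  assume k: "k1 < k2"
  show "has_core 2 (PP r1 r2 k1 k2) (stair (nat (k2 - k1 - 1)))"
    unfolding PP_gen2[OF R1 R2 k] by (rule PP_core[OF R2 R1])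
  show "quot2_bar (nat (k2 - k1 - 1)) (PP r1 r2 k1 k2) = (r2, r1)"
    unfolding PP_gen2[OF R1 R2 k] by (rule PP_quot[OF R2 R1])
qed

lemma decompose:
  assumes P: "is_partition p"
  shows "\<exists>r1 r2 k1 k2. is_partition r1 \<and> is_partition r2 \<and> p = PP r1 r2 k1 k2"
proof -
  define C1 where "C1 = {j. 2 * j + 1 \<in> beta_row p 0}"
  define C2 where "C2 = {j. 2 * j \<in> beta_row p 0}"
  have M: "mrg C1 C2 = beta_row p 0"
  proof (intro set_eqI)
    fix z
    show "z \<in> mrg C1 C2 \<longleftrightarrow> z \<in> beta_row p 0"
    proof (cases "even z")
      case True
      then obtain m where m: "z = 2 * m" by (auto elim!: evenE)
      show ?thesis unfolding m mrg_even C2_def by simp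
    next
      case False
      then obtain m where m: "z = 2 * m + 1" by (auto elim!: oddE)
      show ?thesis unfolding m mrg_odd C1_def by simp
    qed
  qed
  obtain a where a: "\<forall>x<a. x \<in> beta_row p 0" using beta_low[OF P] by blast
  define a' where "a' = - \<bar>a\<bar> - 1"
  have up: "x \<in> beta_row p 0 \<Longrightarrow> x \<le> int (p 0)" for x using beta_up[OF P] by fastforce
  have ab1: "\<exists>q c. is_partition q \<and> C1 = beta_row q c"
  proof (rule abacus_exists)
    show "{x. x < a'} \<subseteq> C1" using a unfolding C1_def a'_def by auto
    have "C1 \<inter> {a'..} \<subseteq> {a'..int (p 0)}" using up unfolding C1_def by fastforce
    then show "finite (C1 \<inter> {a'..})" using finite_subset by blast
  qed
  have ab2: "\<exists>q c. is_partition q \<and> C2 = beta_row q c"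
  proof (rule abacus_exists)
    show "{x. x < a'} \<subseteq> C2" using a unfolding C2_def a'_def by auto
    have "C2 \<inter> {a'..} \<subseteq> {a'..int (p 0)}" using up unfolding C2_def by fastforce
    then show "finite (C2 \<inter> {a'..})" using finite_subset by blast
  qed
  obtain r1 k1 where r1: "is_partition r1" "C1 = beta_row r1 k1" using ab1 by blast
  obtain r2 k2 where r2: "is_partition r2" "C2 = beta_row r2 k2" using ab2 by blast
  have "p = PP r1 r2 k1 k2" unfolding PP_def using M r1 r2 abacus_part_beta[OF P] by simp
  then show ?thesis using r1 r2 by blast
qed

lemma Phi_eq:
  assumes m: "is_bipartition m"
  shows "Phi t m = PP (fst m) (snd m) (int t) 0"
proof -
  have R1: "is_partition (fst m)" and R2: "is_partition (snd m)" using m is_bipartition_def by auto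
  show ?thesis unfolding Phi_def
  proof (rule the_equality)
    show "is_partition (PP (fst m) (snd m) (int t) 0) \<and> has_core 2 (PP (fst m) (snd m) (int t) 0) (stair t)
          \<and> quot2_bar t (PP (fst m) (snd m) (int t) 0) = m"
      using PP_beta[OF R1 R2] PP_core[OF R1 R2] PP_quot[OF R1 R2] by simp
  next
    fix p assume p: "is_partition p \<and> has_core 2 p (stair t) \<and> quot2_bar t p = m"
    obtain r1 r2 k1 k2 where r: "is_partition r1" "is_partition r2" "p = PP r1 r2 k1 k2"
      using decompose p by blast
    note cq = PP_core_quot[OF r(1) r(2), of k2 k1]
    show "p = PP (fst m) (snd m) (int t) 0"
    proof (cases "k2 \<le> k1")
      case True
      then have "nat (k1 - k2) = t" using cq core2_unique p r(3) by blast
      then have "m = (r1, r2)" using cq True p r(3) by auto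
      then show ?thesis using r(3) PP_gen1[OF r(1) r(2) True] \<open>nat (k1 - k2) = t\<close> by simp
    next
      case False
      then have "nat (k2 - k1 - 1) = t" using cq core2_unique p r(3) by auto
      then have "m = (r2, r1)" using cq False p r(3) by auto
      then show ?thesis using r(3) PP_gen2[OF r(1) r(2)] False \<open>nat (k2 - k1 - 1) = t\<close> by simp
    qed
  qed
qed

lemma part2:
  assumes m': "is_bipartition \<mu>'" and m'': "is_bipartition \<mu>''"
    and hc: "has_core 2 (PP (fst \<mu>') (snd \<mu>') k1 k2) (stair t')"
    and ph: "Phi t' \<mu>'' = PP (fst \<mu>') (snd \<mu>') k1 k2"
  shows "(k2 \<le> k1 \<longrightarrow> t' = nat (k1 - k2) \<and> \<mu>'' = \<mu>')
       \<and> (k1 < k2 \<longrightarrow> t' = nat (k2 - k1 - 1) \<and> \<mu>'' = prod.swap \<mu>')"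
proof -
  have R1: "is_partition (fst \<mu>')" and R2: "is_partition (snd \<mu>')" using m' is_bipartition_def by auto
  have S1: "is_partition (fst \<mu>'')" and S2: "is_partition (snd \<mu>'')" using m'' is_bipartition_def by auto
  have q'': "quot2_bar t' (PP (fst \<mu>') (snd \<mu>') k1 k2) = \<mu>''"
    using Phi_eq[OF m''] ph PP_quot[OF S1 S2, of t'] by simp
  note cq = PP_core_quot[OF R1 R2, of k2 k1]
  show ?thesis
  proof (intro conjI impI)
    assume k: "k2 \<le> k1"
    then show t: "t' = nat (k1 - k2)" using cq hc core2_unique by blast
    show "\<mu>'' = \<mu>'" using cq k q'' t by auto
  next
    assume k: "k1 < k2"
    then show t: "t' = nat (k2 - k1 - 1)" using cq hc core2_unique by blast
    show "\<mu>'' = prod.swap \<mu>'" using cq k q'' t by (cases \<mu>') auto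
  qed
qed

lemma Aset_eq:
  assumes e: "odd e"
  shows "{2 * j + int e | j. j \<in> beta_row r k} \<union> {2 * j | j. j \<in> D}
       = mrg (beta_row r (k + (int e - 1) div 2)) D"
proof -
  define h where "h = (int e - 1) div 2"
  have eh: "int e = 2 * h + 1" using e unfolding h_def by (auto elim!: oddE)
  have "{2 * j + int e | j. j \<in> beta_row r k} = {2 * j + 1 | j. j \<in> beta_row r (k + h)}"
  proof (intro set_eqI iffI)
    fix z assume "z \<in> {2 * j + int e | j. j \<in> beta_row r k}"
    then obtain j where j: "j \<in> beta_row r k" "z = 2 * j + int e" by blast
    have "j + h \<in> (\<lambda>x. x + h) ` beta_row r k" using j by blast
    then have "j + h \<in> beta_row r (k + h)" unfolding shift_beta .
    moreover have "z = 2 * (j + h) + 1" using j eh by simp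
    ultimately show "z \<in> {2 * j + 1 | j. j \<in> beta_row r (k + h)}" by blast
  next
    fix z assume "z \<in> {2 * j + 1 | j. j \<in> beta_row r (k + h)}"
    then obtain j where j: "j \<in> beta_row r (k + h)" "z = 2 * j + 1" by blast
    have "j \<in> (\<lambda>x. x + h) ` beta_row r k" using j(1) unfolding shift_beta[symmetric] .
    then obtain i where i: "i \<in> beta_row r k" "j = i + h" by blast
    have "z = 2 * i + int e" using i j eh by simp
    then show "z \<in> {2 * j + int e | j. j \<in> beta_row r k}" using i by blast
  qed
  then show ?thesis unfolding mrg_def h_def by simp
qed

lemma two_ne': "(2::int) * a + 1 \<noteq> 2 * b" using two_ne by metis

lemma mrg_a: "mrg (C1 - {J}) (insert j C2) = insert (2 * j) (mrg C1 C2 - {2 * J + 1})"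
proof (intro set_eqI)
  fix z
  show "z \<in> mrg (C1 - {J}) (insert j C2) \<longleftrightarrow> z \<in> insert (2 * j) (mrg C1 C2 - {2 * J + 1})"
  proof (cases "even z")
    case True
    then obtain m where m: "z = 2 * m" by (auto elim!: evenE)
    show ?thesis unfolding m mrg_even using two_ne by auto
  next
    case False
    then obtain m where m: "z = 2 * m + 1" by (auto elim!: oddE)
    show ?thesis unfolding m mrg_odd using two_ne' by auto
  qed
qed

lemma mrg_b: "mrg (insert J C1) (C2 - {j}) = insert (2 * J + 1) (mrg C1 C2 - {2 * j})"
proof (intro set_eqI)
  fix z
  show "z \<in> mrg (insert J C1) (C2 - {j}) \<longleftrightarrow> z \<in> insert (2 * J + 1) (mrg C1 C2 - {2 * j})"
  proof (cases "even z")
    case True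
    then obtain m where m: "z = 2 * m" by (auto elim!: evenE)
    show ?thesis unfolding m mrg_even using two_ne by auto
  next
    case False
    then obtain m where m: "z = 2 * m + 1" by (auto elim!: oddE)
    show ?thesis unfolding m mrg_odd using two_ne' by auto
  qed
qed

lemma shift_remove: "(\<lambda>x. x + h) ` (C - {j}) = (\<lambda>x. x + (h::int)) ` C - {j + h}"
  by auto

lemma shift_insert: "(\<lambda>x. x + h) ` (insert j C) = insert (j + h) ((\<lambda>x. x + (h::int)) ` C)"
  by auto

lemma op_a:
  fixes e t :: nat and \<mu> \<mu>' :: "(nat \<Rightarrow> nat) \<times> (nat \<Rightarrow> nat)" and c' :: "int \<times> int"
  assumes e: "odd e" "e > 1" and m: "is_bipartition \<mu>" and m': "is_bipartition \<mu>'"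
    and op: "elem_op_a (symbol \<mu> (int t + (1 - int e) div 2, 0)) (symbol \<mu>' c')"
  shows "removes_hook e (Phi t \<mu>)
           (abacus_part ({2 * j + int e | j. j \<in> fst (symbol \<mu>' c')} \<union>
                         {2 * j | j. j \<in> snd (symbol \<mu>' c')}))
    \<and> abacus_part ({2 * j + int e | j. j \<in> fst (symbol \<mu>' c')} \<union>
                         {2 * j | j. j \<in> snd (symbol \<mu>' c')}) = PP (fst \<mu>') (snd \<mu>') (int t - 1) 1
    \<and> fst c' = int t + (1 - int e) div 2 - 1"
proof -
  have R1: "is_partition (fst \<mu>)" and R2: "is_partition (snd \<mu>)" using m is_bipartition_def by auto
  have S1: "is_partition (fst \<mu>')" and S2: "is_partition (snd \<mu>')" using m' is_bipartition_def by auto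
  define c1 where "c1 = int t + (1 - int e) div 2"
  define h where "h = (int e - 1) div 2"
  have ch: "c1 + h = int t" unfolding c1_def h_def using e(1) by (auto elim!: oddE)
  have eh: "int e = 2 * h + 1" using e(1) unfolding h_def by (auto elim!: oddE)
  obtain j where j: "j \<in> beta_row (fst \<mu>) c1" "j \<notin> beta_row (snd \<mu>) 0"
    "beta_row (fst \<mu>') (fst c') = beta_row (fst \<mu>) c1 - {j}"
    "beta_row (snd \<mu>') (snd c') = insert j (beta_row (snd \<mu>) 0)"
    using op unfolding elem_op_a_def symbol_def c1_def by auto
  have c1': "fst c' = c1 - 1" by (rule charge_remove[OF R1 S1 j(1) j(3)])
  have c2': "snd c' = 0 + 1" by (rule charge_insert[OF R2 S2 j(2) j(4)])
  define J where "J = j + h"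
  have JJ: "J \<in> beta_row (fst \<mu>) (int t)"
  proof -
    have "J \<in> (\<lambda>x. x + h) ` beta_row (fst \<mu>) c1" using j(1) J_def by blast
    then show ?thesis unfolding shift_beta ch .
  qed
  have b1: "beta_row (fst \<mu>') (fst c' + h) = beta_row (fst \<mu>) (int t) - {J}"
    unfolding shift_beta[symmetric] j(3) shift_remove shift_beta ch J_def ..
  define A where "A = {2 * j + int e | j. j \<in> fst (symbol \<mu>' c')} \<union> {2 * j | j. j \<in> snd (symbol \<mu>' c')}"
  have A1: "A = mrg (beta_row (fst \<mu>') (fst c' + h)) (beta_row (snd \<mu>') (snd c'))"
    unfolding A_def symbol_def h_def using Aset_eq[OF e(1)] by simp
  define l where "l = PP (fst \<mu>) (snd \<mu>) (int t) 0"
  have L: "is_partition l" "mrg (beta_row (fst \<mu>) (int t)) (beta_row (snd \<mu>) 0) = beta_row l (int t + 0 + 1)"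
    using PP_beta[OF R1 R2] l_def by auto
  have A2: "A = insert (2 * j) (beta_row l (int t + 0 + 1) - {2 * J + 1})"
    unfolding A1 b1 j(4) mrg_a L(2) ..
  have X: "2 * J + 1 \<in> beta_row l (int t + 0 + 1)" using JJ L(2)[symmetric] by simp
  have XE: "2 * J + 1 - int e = 2 * j" using eh J_def by simp
  have Xn: "2 * J + 1 - int e \<notin> beta_row l (int t + 0 + 1)"
    unfolding XE L(2)[symmetric] mrg_even using j(2) .
  have hk: "removes_hook e (abacus_part (beta_row l (int t + 0 + 1)))
      (abacus_part (insert (2 * J + 1 - int e) (beta_row l (int t + 0 + 1) - {2 * J + 1})))"
    using hook_abacus[OF L(1) _ X Xn] e(2) by simp
  have "Phi t \<mu> = l" using Phi_eq[OF m] l_def by simp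
  then have r: "removes_hook e (Phi t \<mu>) (abacus_part A)"
    using hk unfolding XE A2[symmetric] abacus_part_beta[OF L(1)] by simp
  have k1: "fst c' + h = int t - 1" "snd c' = 1" using c1' c2' ch by simp+
  have "abacus_part A = PP (fst \<mu>') (snd \<mu>') (int t - 1) 1"
    unfolding A1 PP_def k1 ..
  then show ?thesis using r c1' unfolding A_def c1_def by simp
qed

lemma op_b:
  fixes e t :: nat and \<mu> \<mu>' :: "(nat \<Rightarrow> nat) \<times> (nat \<Rightarrow> nat)" and c' :: "int \<times> int"
  assumes e: "odd e" "e > 1" and m: "is_bipartition \<mu>" and m': "is_bipartition \<mu>'"
    and op: "elem_op_b e (symbol \<mu> (int t + (1 - int e) div 2, 0)) (symbol \<mu>' c')"
  shows "removes_hook e (Phi t \<mu>)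
           (abacus_part ({2 * j + int e | j. j \<in> fst (symbol \<mu>' c')} \<union>
                         {2 * j | j. j \<in> snd (symbol \<mu>' c')}))
    \<and> abacus_part ({2 * j + int e | j. j \<in> fst (symbol \<mu>' c')} \<union>
                         {2 * j | j. j \<in> snd (symbol \<mu>' c')}) = PP (fst \<mu>') (snd \<mu>') (int t + 1) (-1)
    \<and> fst c' = int t + (1 - int e) div 2 + 1"
proof -
  have R1: "is_partition (fst \<mu>)" and R2: "is_partition (snd \<mu>)" using m is_bipartition_def by auto
  have S1: "is_partition (fst \<mu>')" and S2: "is_partition (snd \<mu>')" using m' is_bipartition_def by auto
  define c1 where "c1 = int t + (1 - int e) div 2"
  define h where "h = (int e - 1) div 2"
  have ch: "c1 + h = int t" unfolding c1_def h_def using e(1) by (auto elim!: oddE)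
  have eh: "int e = 2 * h + 1" using e(1) unfolding h_def by (auto elim!: oddE)
  obtain j where j: "j \<in> beta_row (snd \<mu>) 0" "j - int e \<notin> beta_row (fst \<mu>) c1"
    "beta_row (fst \<mu>') (fst c') = insert (j - int e) (beta_row (fst \<mu>) c1)"
    "beta_row (snd \<mu>') (snd c') = beta_row (snd \<mu>) 0 - {j}"
    using op unfolding elem_op_b_def symbol_def c1_def by auto
  have c1': "fst c' = c1 + 1" by (rule charge_insert[OF R1 S1 j(2) j(3)])
  have c2': "snd c' = 0 - 1" by (rule charge_remove[OF R2 S2 j(1) j(4)])
  define J where "J = j - int e + h"
  have JJ: "J \<notin> beta_row (fst \<mu>) (int t)"
  proof
    assume "J \<in> beta_row (fst \<mu>) (int t)"
    then have "J \<in> (\<lambda>x. x + h) ` beta_row (fst \<mu>) c1" unfolding shift_beta ch .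
    then show False using j(2) J_def by auto
  qed
  have b1: "beta_row (fst \<mu>') (fst c' + h) = insert J (beta_row (fst \<mu>) (int t))"
    unfolding shift_beta[symmetric] j(3) shift_insert shift_beta ch J_def ..
  define A where "A = {2 * j + int e | j. j \<in> fst (symbol \<mu>' c')} \<union> {2 * j | j. j \<in> snd (symbol \<mu>' c')}"
  have A1: "A = mrg (beta_row (fst \<mu>') (fst c' + h)) (beta_row (snd \<mu>') (snd c'))"
    unfolding A_def symbol_def h_def using Aset_eq[OF e(1)] by simp
  define l where "l = PP (fst \<mu>) (snd \<mu>) (int t) 0"
  have L: "is_partition l" "mrg (beta_row (fst \<mu>) (int t)) (beta_row (snd \<mu>) 0) = beta_row l (int t + 0 + 1)"
    using PP_beta[OF R1 R2] l_def by auto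
  have A2: "A = insert (2 * J + 1) (beta_row l (int t + 0 + 1) - {2 * j})"
    unfolding A1 b1 j(4) mrg_b L(2) ..
  have X: "2 * j \<in> beta_row l (int t + 0 + 1)" using j(1) L(2)[symmetric] by simp
  have XE: "2 * j - int e = 2 * J + 1" using eh J_def by simp
  have Xn: "2 * j - int e \<notin> beta_row l (int t + 0 + 1)"
    unfolding XE L(2)[symmetric] mrg_odd using JJ .
  have hk: "removes_hook e (abacus_part (beta_row l (int t + 0 + 1)))
      (abacus_part (insert (2 * j - int e) (beta_row l (int t + 0 + 1) - {2 * j})))"
    using hook_abacus[OF L(1) _ X Xn] e(2) by simp
  have "Phi t \<mu> = l" using Phi_eq[OF m] l_def by simp
  then have r: "removes_hook e (Phi t \<mu>) (abacus_part A)"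
    using hk unfolding XE A2[symmetric] abacus_part_beta[OF L(1)] by simp
  have k1: "fst c' + h = int t + 1" "snd c' = -1" using c1' c2' ch by simp+
  have "abacus_part A = PP (fst \<mu>') (snd \<mu>') (int t + 1) (-1)"
    unfolding A1 PP_def k1 ..
  then show ?thesis using r c1' unfolding A_def c1_def by simp
qed

theorem proposition7p3:
  fixes e t :: nat and \<mu> \<mu>' :: "(nat \<Rightarrow> nat) \<times> (nat \<Rightarrow> nat)" and c' :: "int \<times> int"
  assumes "e > 1" and "odd e"
    and "is_bipartition \<mu>" and "is_bipartition \<mu>'"
    and "elem_op_a (symbol \<mu> (int t + (1 - int e) div 2, 0)) (symbol \<mu>' c') \<or>
         elem_op_b e (symbol \<mu> (int t + (1 - int e) div 2, 0)) (symbol \<mu>' c')"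
  shows "removes_hook e (Phi t \<mu>)
           (abacus_part ({2 * j + int e | j. j \<in> fst (symbol \<mu>' c')} \<union>
                         {2 * j | j. j \<in> snd (symbol \<mu>' c')}))
     \<and> (\<forall>t' \<mu>''. has_core 2 (abacus_part ({2 * j + int e | j. j \<in> fst (symbol \<mu>' c')} \<union>
                                          {2 * j | j. j \<in> snd (symbol \<mu>' c')})) (stair t')
          \<and> is_bipartition \<mu>''
          \<and> Phi t' \<mu>'' = abacus_part ({2 * j + int e | j. j \<in> fst (symbol \<mu>' c')} \<union>
                                      {2 * j | j. j \<in> snd (symbol \<mu>' c')})
        \<longrightarrow> (elem_op_b e (symbol \<mu> (int t + (1 - int e) div 2, 0)) (symbol \<mu>' c') \<longrightarrow> t' = t + 2)
          \<and> (elem_op_a (symbol \<mu> (int t + (1 - int e) div 2, 0)) (symbol \<mu>' c') \<longrightarrow>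
               t' = (if t \<ge> 2 then t - 2 else if t = 1 then 0 else 1))
          \<and> \<mu>'' = (if even t = even t' then \<mu>' else prod.swap \<mu>'))"
proof -
  define L where "L = abacus_part ({2 * j + int e | j. j \<in> fst (symbol \<mu>' c')} \<union>
                         {2 * j | j. j \<in> snd (symbol \<mu>' c')})"
  define B where "B = symbol \<mu> (int t + (1 - int e) div 2, 0)"
  have main: "removes_hook e (Phi t \<mu>) L \<and> (\<forall>t' \<mu>''. has_core 2 L (stair t') \<and> is_bipartition \<mu>'' \<and> Phi t' \<mu>'' = L
        \<longrightarrow> (elem_op_b e B (symbol \<mu>' c') \<longrightarrow> t' = t + 2)
          \<and> (elem_op_a B (symbol \<mu>' c') \<longrightarrow> t' = (if t \<ge> 2 then t - 2 else if t = 1 then 0 else 1))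
          \<and> \<mu>'' = (if even t = even t' then \<mu>' else prod.swap \<mu>'))"
  proof (cases "elem_op_a B (symbol \<mu>' c')")
    case True
    have A: "removes_hook e (Phi t \<mu>) L" "L = PP (fst \<mu>') (snd \<mu>') (int t - 1) 1"
      "fst c' = int t + (1 - int e) div 2 - 1"
      using op_a[OF assms(2) assms(1) assms(3) assms(4)] True unfolding B_def L_def by blast+
    have nb: "\<not> elem_op_b e B (symbol \<mu>' c')"
    proof
      assume "elem_op_b e B (symbol \<mu>' c')"
      then have "fst c' = int t + (1 - int e) div 2 + 1"
        using op_b[OF assms(2) assms(1) assms(3) assms(4)] unfolding B_def by blast
      then show False using A(3) by simp
    qed
    show ?thesis
    proof (intro conjI allI impI)
      show "removes_hook e (Phi t \<mu>) L" by (rule A(1))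
    next
      fix t' \<mu>'' assume h: "has_core 2 L (stair t') \<and> is_bipartition \<mu>'' \<and> Phi t' \<mu>'' = L"
      have p2: "(1 \<le> int t - 1 \<longrightarrow> t' = nat (int t - 1 - 1) \<and> \<mu>'' = \<mu>')
          \<and> (int t - 1 < 1 \<longrightarrow> t' = nat (1 - (int t - 1) - 1) \<and> \<mu>'' = prod.swap \<mu>')"
        using part2[OF assms(4), of \<mu>'' "int t - 1" 1 t'] h A(2) by simp
      show "elem_op_b e B (symbol \<mu>' c') \<Longrightarrow> t' = t + 2" using nb by simp
      show "t' = (if t \<ge> 2 then t - 2 else if t = 1 then 0 else 1)"
      proof -
        consider "t \<ge> 2" | "t = 1" | "t = 0" by linarith
        then show ?thesis
        proof cases
          case 1 then have "1 \<le> int t - 1" by simp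
          then have "t' = nat (int t - 1 - 1)" using p2 by blast
          then show ?thesis using 1 by simp
        next
          case 2 then have "int t - 1 < 1" by simp
          then have "t' = nat (1 - (int t - 1) - 1)" using p2 by blast
          then show ?thesis using 2 by simp
        next
          case 3 then have "int t - 1 < 1" by simp
          then have "t' = nat (1 - (int t - 1) - 1)" using p2 by blast
          then show ?thesis using 3 by simp
        qed
      qed
      show "\<mu>'' = (if even t = even t' then \<mu>' else prod.swap \<mu>')"
      proof (cases "t \<ge> 2")
        case True
        then have "t' = t - 2" "\<mu>'' = \<mu>'" using p2 by auto
        then show ?thesis using True by auto
      next
        case False
        then have "t' = nat (1 - int t)" "\<mu>'' = prod.swap \<mu>'" using p2 by auto
        moreover have "even t \<noteq> even (nat (1 - int t))"
        proof -
          have "t = 0 \<or> t = 1" using False by auto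
          then show ?thesis by auto
        qed
        ultimately show ?thesis by simp
      qed
    qed
  next
    case False
    then have Bop: "elem_op_b e B (symbol \<mu>' c')" using assms(5) unfolding B_def by blast
    have A: "removes_hook e (Phi t \<mu>) L" "L = PP (fst \<mu>') (snd \<mu>') (int t + 1) (-1)"
      using op_b[OF assms(2) assms(1) assms(3) assms(4)] Bop unfolding B_def L_def by blast+
    show ?thesis
    proof (intro conjI allI impI)
      show "removes_hook e (Phi t \<mu>) L" by (rule A(1))
    next
      fix t' \<mu>'' assume h: "has_core 2 L (stair t') \<and> is_bipartition \<mu>'' \<and> Phi t' \<mu>'' = L"
      have p2: "t' = nat (int t + 1 - (-1)) \<and> \<mu>'' = \<mu>'"
        using part2[OF assms(4), of \<mu>'' "int t + 1" "-1" t'] h A(2) by simp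
      then have t': "t' = t + 2" by simp
      show "t' = t + 2" by (rule t')
      show "elem_op_a B (symbol \<mu>' c') \<Longrightarrow> t' = (if t \<ge> 2 then t - 2 else if t = 1 then 0 else 1)"
        using False by simp
      have "\<mu>'' = \<mu>'" using p2 by blast
      then show "\<mu>'' = (if even t = even t' then \<mu>' else prod.swap \<mu>')" using t' by simp
    qed
  qed
  then show ?thesis unfolding L_def B_def .
qed

end
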